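(* Let $p$ be an odd prime, and let $L$ be a Lie sublattice of a saturable $\mathbb{Z}_p$-Lie lattice $S$. Then the isolator $\mathrm{iso}_S(L)$ is saturable and $|\mathrm{iso}_S(L):L|<\infty$; in particular, $L$ and $\mathrm{iso}_S(L)$ have the same dimension. Furthermore, if $L$ is a Lie ideal of $S$, then $\mathrm{iso}_S(L)$ is PF-embedded in $S$.
   Context: A $\mathbb{Z}_p$-Lie lattice is a Lie algebra over $\mathbb{Z}_p$ free of finite rank as a module (dimension = rank). The isolator of a Lie sublattice $L$ in $S$ is $\mathrm{iso}_S(L)=S\cap(\mathbb{Q}_p\otimes L)$ (inside $\mathbb{Q}_p\otimes S$). For an ideal $M$ of $S$, a potent filtration of $M$ in $S$ is a descending series $(M_i)_{i\in\mathbb{N}}$ of ideals of $S$ with $M_1=M$, $\bigcap M_i=0$, $[M_i,S]\subseteq M_{i+1}$, $[M_i,S,\ldots,S]\subseteq pM_{i+1}$ ($p-1$ copies of $S$, brackets left-normed); $M$ is PF-embedded if such exists; a Lie lattice is saturable iff it admits a potent filtration of itself. *)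

theory Defs
  imports "HOL-Computational_Algebra.Primes"
begin

text \<open>A p-adic integer is represented by its compatible sequence of residues
  x n in {0..<p^n} with x (n+1) mod p^n = x n (inverse limit of Z/p^n Z).\<close>

type_synonym zp = "nat \<Rightarrow> int"

definition Zp :: "int \<Rightarrow> zp set" where
  "Zp p = {x. \<forall>n. 0 \<le> x n \<and> x n < p ^ n \<and> x (Suc n) mod p ^ n = x n}"

definition zadd :: "int \<Rightarrow> zp \<Rightarrow> zp \<Rightarrow> zp" where
  "zadd p x y = (\<lambda>n. (x n + y n) mod p ^ n)"

definition zmul :: "int \<Rightarrow> zp \<Rightarrow> zp \<Rightarrow> zp" where
  "zmul p x y = (\<lambda>n. (x n * y n) mod p ^ n)"

definition zof_int :: "int \<Rightarrow> int \<Rightarrow> zp" where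
  "zof_int p k = (\<lambda>n. k mod p ^ n)"

type_synonym zvec = "nat \<Rightarrow> zp"

definition Zpvec :: "int \<Rightarrow> nat \<Rightarrow> zvec set" where
  "Zpvec p d = {v. (\<forall>i<d. v i \<in> Zp p) \<and> (\<forall>i\<ge>d. v i = (\<lambda>n. 0))}"

definition vzero :: zvec where
  "vzero = (\<lambda>i n. 0)"

definition vadd :: "int \<Rightarrow> zvec \<Rightarrow> zvec \<Rightarrow> zvec" where
  "vadd p v w = (\<lambda>i. zadd p (v i) (w i))"

definition vsmul :: "int \<Rightarrow> zp \<Rightarrow> zvec \<Rightarrow> zvec" where
  "vsmul p c v = (\<lambda>i. zmul p c (v i))"

definition lie_lattice :: "int \<Rightarrow> nat \<Rightarrow> (zvec \<Rightarrow> zvec \<Rightarrow> zvec) \<Rightarrow> bool" where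
  "lie_lattice p d br \<longleftrightarrow>
     (\<forall>x\<in>Zpvec p d. \<forall>y\<in>Zpvec p d. br x y \<in> Zpvec p d) \<and>
     (\<forall>x\<in>Zpvec p d. \<forall>y\<in>Zpvec p d. \<forall>z\<in>Zpvec p d.
        br (vadd p x y) z = vadd p (br x z) (br y z) \<and>
        br z (vadd p x y) = vadd p (br z x) (br z y)) \<and>
     (\<forall>c\<in>Zp p. \<forall>x\<in>Zpvec p d. \<forall>y\<in>Zpvec p d.
        br (vsmul p c x) y = vsmul p c (br x y) \<and> br x (vsmul p c y) = vsmul p c (br x y)) \<and>
     (\<forall>x\<in>Zpvec p d. br x x = vzero) \<and>
     (\<forall>x\<in>Zpvec p d. \<forall>y\<in>Zpvec p d. \<forall>z\<in>Zpvec p d.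
        vadd p (br x (br y z)) (vadd p (br y (br z x)) (br z (br x y))) = vzero)"

definition submodule :: "int \<Rightarrow> nat \<Rightarrow> zvec set \<Rightarrow> bool" where
  "submodule p d M \<longleftrightarrow> M \<subseteq> Zpvec p d \<and> vzero \<in> M \<and>
     (\<forall>x\<in>M. \<forall>y\<in>M. vadd p x y \<in> M) \<and> (\<forall>c\<in>Zp p. \<forall>x\<in>M. vsmul p c x \<in> M)"

definition lincomb :: "int \<Rightarrow> zp list \<Rightarrow> zvec list \<Rightarrow> zvec" where
  "lincomb p cs bs = foldr (vadd p) (map2 (vsmul p) cs bs) vzero"

definition is_basis :: "int \<Rightarrow> zvec set \<Rightarrow> zvec list \<Rightarrow> bool" where
  "is_basis p M bs \<longleftrightarrow> set bs \<subseteq> M \<and>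
     (\<forall>x\<in>M. \<exists>!cs. length cs = length bs \<and> set cs \<subseteq> Zp p \<and> x = lincomb p cs bs)"

definition lattice_dim :: "int \<Rightarrow> zvec set \<Rightarrow> nat" where
  "lattice_dim p M = (LEAST n. \<exists>bs. length bs = n \<and> is_basis p M bs)"

text \<open>M is a Lie sublattice of the Lie lattice (Z_p^d, br): a Z_p-submodule closed
  under the bracket which is free of finite rank (i.e. itself a Z_p-Lie lattice).\<close>

definition lie_sublattice :: "int \<Rightarrow> nat \<Rightarrow> (zvec \<Rightarrow> zvec \<Rightarrow> zvec) \<Rightarrow> zvec set \<Rightarrow> bool" where
  "lie_sublattice p d br M \<longleftrightarrow> submodule p d M \<and>
     (\<forall>x\<in>M. \<forall>y\<in>M. br x y \<in> M) \<and> (\<exists>bs. is_basis p M bs)"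

definition lie_ideal :: "int \<Rightarrow> nat \<Rightarrow> (zvec \<Rightarrow> zvec \<Rightarrow> zvec) \<Rightarrow> zvec set \<Rightarrow> zvec set \<Rightarrow> bool" where
  "lie_ideal p d br S I \<longleftrightarrow> submodule p d I \<and> I \<subseteq> S \<and> (\<forall>x\<in>I. \<forall>s\<in>S. br x s \<in> I)"

text \<open>Left-normed iterated bracket [x, s1, ..., sk] = [...[[x,s1],s2],...,sk].\<close>

definition iter_br :: "(zvec \<Rightarrow> zvec \<Rightarrow> zvec) \<Rightarrow> zvec \<Rightarrow> zvec list \<Rightarrow> zvec" where
  "iter_br br x ss = foldl br x ss"

text \<open>Potent filtration (M_i)_{i>=1} of the ideal M in S.  Since the M_i are
  submodules, the inclusions of the submodules [M_i,S] and [M_i,S,...,S] are stated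
  on generators.\<close>

definition potent_filtration ::
  "int \<Rightarrow> nat \<Rightarrow> (zvec \<Rightarrow> zvec \<Rightarrow> zvec) \<Rightarrow> zvec set \<Rightarrow> zvec set \<Rightarrow> (nat \<Rightarrow> zvec set) \<Rightarrow> bool" where
  "potent_filtration p d br S M Ms \<longleftrightarrow>
     Ms 1 = M \<and>
     (\<forall>i\<ge>1. lie_ideal p d br S (Ms i)) \<and>
     (\<forall>i\<ge>1. Ms (Suc i) \<subseteq> Ms i) \<and>
     (\<Inter>i\<in>{1..}. Ms i) = {vzero} \<and>
     (\<forall>i\<ge>1. \<forall>x\<in>Ms i. \<forall>s\<in>S. br x s \<in> Ms (Suc i)) \<and>
     (\<forall>i\<ge>1. \<forall>x\<in>Ms i. \<forall>ss. length ss = nat (p - 1) \<longrightarrow> set ss \<subseteq> S \<longrightarrow>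
        iter_br br x ss \<in> vsmul p (zof_int p p) ` Ms (Suc i))"

definition PF_embedded ::
  "int \<Rightarrow> nat \<Rightarrow> (zvec \<Rightarrow> zvec \<Rightarrow> zvec) \<Rightarrow> zvec set \<Rightarrow> zvec set \<Rightarrow> bool" where
  "PF_embedded p d br S M \<longleftrightarrow> (\<exists>Ms. potent_filtration p d br S M Ms)"

definition saturable :: "int \<Rightarrow> nat \<Rightarrow> (zvec \<Rightarrow> zvec \<Rightarrow> zvec) \<Rightarrow> zvec set \<Rightarrow> bool" where
  "saturable p d br M \<longleftrightarrow> lie_sublattice p d br M \<and> PF_embedded p d br M M"

text \<open>Isolator iso_S(L) = S \<inter> (Q_p \<otimes> L).  Inside Q_p \<otimes> S, Q_p \<otimes> L consists of
  the elements p^(-k) l with l in L, so iso_S(L) = {x in S. p^k x in L for some k}.\<close>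

definition isolator :: "int \<Rightarrow> zvec set \<Rightarrow> zvec set \<Rightarrow> zvec set" where
  "isolator p S L = {x\<in>S. \<exists>k::nat. vsmul p (zof_int p (p ^ k)) x \<in> L}"

text \<open>Index |M : L| (L \<subseteq> M additive subgroups): the set of cosets x + L, x in M.\<close>

definition cosets :: "int \<Rightarrow> zvec set \<Rightarrow> zvec set \<Rightarrow> zvec set set" where
  "cosets p M L = {vadd p x ` L | x. x \<in> M}"

end

theory Submission
  imports Defs "HOL-Number_Theory.Cong" "HOL-Library.FuncSet"
begin


definition zero_zp :: zp where "zero_zp = (\<lambda>n. 0)"
definition pk :: "int \<Rightarrow> nat \<Rightarrow> zp" where "pk p k = zof_int p (p ^ k)"
definition zneg :: "int \<Rightarrow> zp \<Rightarrow> zp" where "zneg p x = (\<lambda>n. (- x n) mod p ^ n)"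
definition lc :: "int \<Rightarrow> nat \<Rightarrow> (nat \<Rightarrow> zp) \<Rightarrow> (nat \<Rightarrow> zvec) \<Rightarrow> zvec" where
  "lc p m c B = (\<lambda>i n. (\<Sum>j<m. c j n * B j i n) mod p ^ n)"
definition span :: "int \<Rightarrow> nat \<Rightarrow> (nat \<Rightarrow> zvec) \<Rightarrow> zvec set" where
  "span p m B = {lc p m c B | c. \<forall>j<m. c j \<in> Zp p}"
definition nv :: "int \<Rightarrow> zvec \<Rightarrow> bool" where
  "nv p u \<longleftrightarrow> (\<forall>i n. u i n mod p ^ n = u i n)"

locale pz = fixes p :: int assumes p_prime: "prime p"
begin

lemma p_gt1: "p > 1" using p_prime prime_gt_1_int by blast
lemma pow_pos: "p ^ n > 0" using p_gt1 by simp

lemma ZpD: assumes "x \<in> Zp p" shows "0 \<le> x n" "x n < p ^ n" "x (Suc n) mod p ^ n = x n"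
  using assms unfolding Zp_def by auto

lemma Zp_mod[simp]: "x \<in> Zp p \<Longrightarrow> x n mod p ^ n = x n"
  using ZpD[of x n] by simp

lemma Zp_le: assumes "x \<in> Zp p" "k \<le> n" shows "x n mod p ^ k = x k"
  using assms(2)
proof (induction n)
  case 0 then show ?case using ZpD[OF assms(1), of 0] by simp
next
  case (Suc n)
  show ?case
  proof (cases "k = Suc n")
    case True then show ?thesis using Zp_mod[OF assms(1), of "Suc n"] by simp
  next
    case False
    then have "k \<le> n" using Suc by simp
    have "p ^ k dvd p ^ n" using \<open>k \<le> n\<close> by (simp add: le_imp_power_dvd)
    then have "x (Suc n) mod p ^ k = (x (Suc n) mod p ^ n) mod p ^ k" by (simp add: mod_mod_cancel)
    also have "\<dots> = x n mod p ^ k" using ZpD(3)[OF assms(1)] by simp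
    finally show ?thesis using Suc.IH[OF \<open>k \<le> n\<close>] by simp
  qed
qed

lemma Zp_cong_le: "x \<in> Zp p \<Longrightarrow> k \<le> n \<Longrightarrow> [x n = x k] (mod p ^ k)"
  using Zp_le[of x k n] by (simp add: cong_def)

lemma Zp_Suc_cong: "x \<in> Zp p \<Longrightarrow> [x (Suc n) = x n] (mod p ^ n)"
  using Zp_cong_le[of x n "Suc n"] by simp

lemma Zp_intro:
  assumes "\<And>n. [f (Suc n) = f n] (mod p ^ n)"
  shows "(\<lambda>n. f n mod p ^ n) \<in> Zp p"
proof -
  have "(f (Suc n) mod p ^ Suc n) mod p ^ n = f n mod p ^ n" for n
  proof -
    have "p ^ n dvd p ^ Suc n" by (simp add: le_imp_power_dvd)
    then have "(f (Suc n) mod p ^ Suc n) mod p ^ n = f (Suc n) mod p ^ n" by (simp add: mod_mod_cancel)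
    also have "\<dots> = f n mod p ^ n" using assms[of n] by (simp add: cong_def)
    finally show ?thesis .
  qed
  then show ?thesis unfolding Zp_def using pow_pos by auto
qed

lemma Zp_eqI: assumes "x \<in> Zp p" "y \<in> Zp p" "\<And>n. [x n = y n] (mod p ^ n)" shows "x = y"
proof
  fix n show "x n = y n" using assms(3)[of n] Zp_mod[OF assms(1)] Zp_mod[OF assms(2)]
    by (simp add: cong_def)
qed

lemma zero_Zp[simp]: "zero_zp \<in> Zp p" unfolding Zp_def zero_zp_def using pow_pos by auto
lemma zero_fun_Zp[simp]: "(\<lambda>n. 0) \<in> Zp p" using zero_Zp unfolding zero_zp_def .

lemma zadd_Zp[simp]: "x \<in> Zp p \<Longrightarrow> y \<in> Zp p \<Longrightarrow> zadd p x y \<in> Zp p"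
  unfolding zadd_def by (rule Zp_intro) (intro cong_add Zp_Suc_cong)

lemma zmul_Zp[simp]: "x \<in> Zp p \<Longrightarrow> y \<in> Zp p \<Longrightarrow> zmul p x y \<in> Zp p"
  unfolding zmul_def by (rule Zp_intro) (intro cong_mult Zp_Suc_cong)

lemma zneg_Zp[simp]: "x \<in> Zp p \<Longrightarrow> zneg p x \<in> Zp p"
  unfolding zneg_def by (rule Zp_intro) (intro cong_minus_minus_iff[THEN iffD2] Zp_Suc_cong)

lemma zof_Zp[simp]: "zof_int p k \<in> Zp p"
  unfolding zof_int_def by (rule Zp_intro) simp

lemma pk_Zp[simp]: "pk p k \<in> Zp p" unfolding pk_def by simp

lemma Zpvec_D: "v \<in> Zpvec p d \<Longrightarrow> i < d \<Longrightarrow> v i \<in> Zp p"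
  and Zpvec_D2: "v \<in> Zpvec p d \<Longrightarrow> d \<le> i \<Longrightarrow> v i = (\<lambda>n. 0)"
  unfolding Zpvec_def by auto

lemma Zpvec_nv: "v \<in> Zpvec p d \<Longrightarrow> nv p v"
  unfolding nv_def
proof (intro allI)
  fix i n assume v: "v \<in> Zpvec p d"
  show "v i n mod p ^ n = v i n"
  proof (cases "i < d")
    case True then show ?thesis using Zpvec_D[OF v] by simp
  next
    case False then show ?thesis using Zpvec_D2[OF v, of i] by simp
  qed
qed

lemma vec_eqI: assumes "nv p u" "nv p w" "\<And>i n. [u i n = w i n] (mod p ^ n)" shows "u = w"
proof (intro ext)
  fix i n show "u i n = w i n" using assms unfolding nv_def cong_def by metis
qed

lemma nv_lc[simp]: "nv p (lc p m c B)" unfolding nv_def lc_def by simp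
lemma nv_vadd[simp]: "nv p (vadd p u w)" unfolding nv_def vadd_def zadd_def by simp
lemma nv_vsmul[simp]: "nv p (vsmul p k u)" unfolding nv_def vsmul_def zmul_def by simp
lemma nv_vzero[simp]: "nv p vzero" unfolding nv_def vzero_def by simp

lemma lc_Zpvec:
  assumes "\<And>j. j < m \<Longrightarrow> c j \<in> Zp p" "\<And>j. j < m \<Longrightarrow> B j \<in> Zpvec p d"
  shows "lc p m c B \<in> Zpvec p d"
  unfolding Zpvec_def
proof (intro CollectI conjI allI impI)
  fix i assume "i < d"
  show "lc p m c B i \<in> Zp p" unfolding lc_def
    by (rule Zp_intro, rule cong_sum, rule cong_mult)
       (use assms \<open>i < d\<close> in \<open>auto intro!: Zp_Suc_cong intro: Zpvec_D[of _ d]\<close>)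
next
  fix i assume "d \<le> i"
  then have "B j i = (\<lambda>n. 0)" if "j < m" for j using assms(2)[OF that] Zpvec_D2 by blast
  then show "lc p m c B i = (\<lambda>n. 0)" unfolding lc_def by (simp add: fun_eq_iff)
qed

lemma lincomb_lc:
  "length cs = m \<Longrightarrow> length bs = m \<Longrightarrow> lincomb p cs bs = lc p m (nth cs) (nth bs)"
proof (induction cs arbitrary: bs m)
  case Nil then show ?case by (simp add: lincomb_def lc_def vzero_def)
next
  case (Cons c cs)
  then obtain b bs' where bs: "bs = b # bs'" and m: "m = Suc (length cs)" "length bs' = length cs"
    by (cases bs) auto
  have IH: "lincomb p cs bs' = lc p (length cs) (nth cs) (nth bs')" using Cons.IH m by simp
  have "lincomb p (c # cs) bs = vadd p (vsmul p c b) (lincomb p cs bs')"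
    by (simp add: lincomb_def bs)
  also have "\<dots> = lc p m (nth (c # cs)) (nth bs)"
    unfolding IH lc_def m bs
    by (simp only: sum.lessThan_Suc_shift) (simp add: vadd_def vsmul_def zadd_def zmul_def mod_add_eq fun_eq_iff)
  finally show ?case .
qed

end

context pz begin

lemma sum_modL[simp]: "(\<Sum>j\<in>A. (f j mod (m::int)) * g j) mod m = (\<Sum>j\<in>A. f j * g j) mod m"
proof -
  have "(\<Sum>j\<in>A. (f j mod m) * g j) mod m = (\<Sum>j\<in>A. ((f j mod m) * g j) mod m) mod m"
    by (simp add: mod_sum_eq)
  also have "\<dots> = (\<Sum>j\<in>A. (f j * g j) mod m) mod m" by (simp add: mod_mult_left_eq)
  also have "\<dots> = (\<Sum>j\<in>A. f j * g j) mod m" by (simp add: mod_sum_eq)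
  finally show ?thesis .
qed

lemma sum_modR[simp]: "(\<Sum>j\<in>A. f j * (g j mod (m::int))) mod m = (\<Sum>j\<in>A. f j * g j) mod m"
  using sum_modL[of g m f A] by (simp add: mult.commute)

lemma sum_mod1[simp]: "(\<Sum>j\<in>A. (f j mod (m::int))) mod m = (\<Sum>j\<in>A. f j) mod m"
  by (simp add: mod_sum_eq)

lemma cong_modI: "[a = b] (mod m) \<Longrightarrow> [a mod m = b] (mod m)" by (simp add: cong_def)

lemma lc_congI:
  assumes "\<And>j n i. j < m \<Longrightarrow> [c j n * B j i n = c' j n * B' j i n] (mod p ^ n)"
  shows "lc p m c B = lc p m c' B'"
  unfolding lc_def using assms by (auto simp: fun_eq_iff cong_def[symmetric] intro!: cong_sum)

lemma lc_cong_coef: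
  assumes "\<And>j n. j < m \<Longrightarrow> [c j n = c' j n] (mod p ^ n)"
  shows "lc p m c B = lc p m c' B"
  by (rule lc_congI) (use assms in \<open>auto intro: cong_mult\<close>)

lemma lc_zero: "lc p m (\<lambda>_. zero_zp) B = vzero"
  unfolding lc_def vzero_def zero_zp_def by simp

lemma lc_add: "vadd p (lc p m c B) (lc p m c' B) = lc p m (\<lambda>j. zadd p (c j) (c' j)) B"
  by (rule vec_eqI, simp, simp) (simp add: vadd_def zadd_def lc_def cong_def mod_add_eq
       sum.distrib[symmetric] distrib_right)

lemma lc_smul: "vsmul p k (lc p m c B) = lc p m (\<lambda>j. zmul p k (c j)) B"
  by (rule vec_eqI, simp, simp) (simp add: vsmul_def zmul_def lc_def cong_def mod_mult_right_eq
      sum_distrib_left mult.assoc)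

lemma lc_Suc: "lc p (Suc m) c B = vadd p (lc p m c B) (vsmul p (c m) (B m))"
  by (rule vec_eqI, simp, simp) (simp add: vsmul_def zmul_def vadd_def zadd_def lc_def cong_def mod_add_eq)

lemma lc_extend:
  assumes "m \<le> m'" "\<And>j. m \<le> j \<Longrightarrow> j < m' \<Longrightarrow> c j = zero_zp"
  shows "lc p m' c B = lc p m c B"
proof -
  have "(\<Sum>j<m'. c j n * B j i n) = (\<Sum>j<m. c j n * B j i n)" for i n
    by (rule sum.mono_neutral_right) (use assms in \<open>auto simp: zero_zp_def\<close>)
  then show ?thesis unfolding lc_def by simp
qed

lemma lc_eq_lt:
  assumes "\<And>j. j < m \<Longrightarrow> c j = c' j" "\<And>j. j < m \<Longrightarrow> B j = B' j"
  shows "lc p m c B = lc p m c' B'"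
  unfolding lc_def using assms by (auto intro!: sum.cong ext)

lemma lc_in_span: "(\<And>j. j < m \<Longrightarrow> c j \<in> Zp p) \<Longrightarrow> lc p m c B \<in> span p m B"
  unfolding span_def by blast

lemma spanD: assumes "x \<in> span p m B" shows "\<exists>c. (\<forall>j<m. c j \<in> Zp p) \<and> x = lc p m c B"
  using assms unfolding span_def by blast

lemma span_vzero: "vzero \<in> span p m B"
  using lc_in_span[of m "\<lambda>_. zero_zp" B] lc_zero by simp

lemma span_add: assumes "x \<in> span p m B" "y \<in> span p m B" shows "vadd p x y \<in> span p m B"
proof -
  obtain c where c: "\<forall>j<m. c j \<in> Zp p" "x = lc p m c B" using spanD[OF assms(1)] by blast
  obtain c' where c': "\<forall>j<m. c' j \<in> Zp p" "y = lc p m c' B" using spanD[OF assms(2)] by blast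
  show ?thesis unfolding c(2) c'(2) lc_add by (rule lc_in_span) (simp add: c c')
qed

lemma span_smul: assumes "k \<in> Zp p" "x \<in> span p m B" shows "vsmul p k x \<in> span p m B"
proof -
  obtain c where c: "\<forall>j<m. c j \<in> Zp p" "x = lc p m c B" using spanD[OF assms(2)] by blast
  show ?thesis unfolding c(2) lc_smul by (rule lc_in_span) (simp add: c assms(1))
qed

lemma span_Zpvec: assumes "\<And>j. j < m \<Longrightarrow> B j \<in> Zpvec p d" shows "span p m B \<subseteq> Zpvec p d"
proof
  fix x assume "x \<in> span p m B"
  then obtain c where c: "\<forall>j<m. c j \<in> Zp p" "x = lc p m c B" using spanD by blast
  show "x \<in> Zpvec p d" unfolding c(2) by (rule lc_Zpvec) (use c assms in auto)
qed

lemma span_mono: assumes "m \<le> m'" shows "span p m B \<subseteq> span p m' B"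
proof
  fix x assume "x \<in> span p m B"
  then obtain c where c: "\<forall>j<m. c j \<in> Zp p" "x = lc p m c B" using spanD by blast
  let ?c = "\<lambda>j. if j < m then c j else zero_zp"
  have e1: "x = lc p m ?c B" unfolding c(2) by (rule lc_eq_lt) simp_all
  have e2: "lc p m' ?c B = lc p m ?c B" by (rule lc_extend) (use assms in auto)
  have "lc p m' ?c B \<in> span p m' B" by (rule lc_in_span) (use c in auto)
  then show "x \<in> span p m' B" using e1 e2 by simp
qed

lemma span_gen: assumes "j < m" "B j \<in> Zpvec p d" shows "B j \<in> span p m B"
proof -
  let ?c = "\<lambda>l. if l = j then zof_int p 1 else zero_zp"
  have "lc p m ?c B = B j"
  proof (rule vec_eqI)
    show "nv p (B j)" using Zpvec_nv assms by blast
  next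
    fix i n
    have "(\<Sum>l<m. ?c l n * B l i n) = (\<Sum>l<m. if l = j then (1 mod p ^ n) * B j i n else 0)"
      by (rule sum.cong) (simp_all add: zof_int_def zero_zp_def)
    also have "\<dots> = (1 mod p ^ n) * B j i n" using assms(1) by (subst sum.delta) auto
    finally have "(\<Sum>l<m. ?c l n * B l i n) = (1 mod p ^ n) * B j i n" .
    then show "[lc p m ?c B i n = B j i n] (mod p ^ n)"
      by (simp add: lc_def cong_def mod_mult_left_eq)
  qed simp
  moreover have "lc p m ?c B \<in> span p m B" by (rule lc_in_span) simp
  ultimately show ?thesis by simp
qed

lemma vsmul_vsmul: "vsmul p k (vsmul p k' x) = vsmul p (zmul p k k') x"
  by (simp add: vsmul_def zmul_def fun_eq_iff mod_mult_right_eq mod_mult_left_eq mult.assoc)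

lemma zmul_pk: "zmul p (pk p a) (pk p b) = pk p (a + b)"
  by (simp add: pk_def zmul_def zof_int_def fun_eq_iff mod_mult_right_eq mod_mult_left_eq power_add)

lemma vsmul_pk_pk: "vsmul p (pk p a) (vsmul p (pk p b) x) = vsmul p (pk p (a + b)) x"
  by (simp add: vsmul_vsmul zmul_pk)

lemma vsmul_one: "nv p x \<Longrightarrow> vsmul p (zof_int p 1) x = x"
  unfolding nv_def by (simp add: vsmul_def zmul_def zof_int_def fun_eq_iff mod_mult_left_eq)

lemma vsmul_vadd: "vsmul p k (vadd p x y) = vadd p (vsmul p k x) (vsmul p k y)"
  by (simp add: vsmul_def vadd_def zmul_def zadd_def fun_eq_iff mod_mult_right_eq mod_add_eq
      distrib_left)

lemma vsmul_vzero: "vsmul p k vzero = vzero"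
  by (simp add: vsmul_def vzero_def zmul_def fun_eq_iff)

lemma inv_unique: "[a * y = 1] (mod m) \<Longrightarrow> [a * z = 1] (mod m) \<Longrightarrow> [y = (z::int)] (mod m)"
proof -
  assume h1: "[a * y = 1] (mod m)" and h2: "[a * z = 1] (mod m)"
  have "[y * (a * z) = y * 1] (mod m)" by (rule cong_scalar_left[OF h2])
  moreover have "[(a * y) * z = 1 * z] (mod m)" by (rule cong_scalar_right[OF h1])
  ultimately show ?thesis by (simp add: cong_def mult.commute mult.left_commute)
qed

lemma unit_inv:
  assumes x: "x \<in> Zp p" and u: "x 1 \<noteq> 0"
  shows "\<exists>w\<in>Zp p. \<forall>n. [x n * w n = 1] (mod p ^ n)"
proof -
  have cop: "coprime (x n) (p ^ n)" for n
  proof (cases n)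
    case 0 then show ?thesis by simp
  next
    case (Suc k)
    have "x n mod p = x 1" using Zp_le[OF x, of 1 n] Suc by simp
    then have "\<not> p dvd x n" using u by (simp add: dvd_eq_mod_eq_0)
    then have "coprime p (x n)" using p_prime by (simp add: prime_imp_coprime)
    then show ?thesis by (simp add: coprime_commute coprime_power_right_iff)
  qed
  define w where "w n = (SOME y. 0 \<le> y \<and> y < p ^ n \<and> [x n * y = 1] (mod p ^ n))" for n
  have w: "0 \<le> w n \<and> w n < p ^ n \<and> [x n * w n = 1] (mod p ^ n)" for n
  proof -
    have "\<exists>y\<ge>0. y < p ^ n \<and> [x n * y = 1] (mod p ^ n)"
      using coprime_iff_invertible'_int[OF pow_pos] cop by blast
    then show ?thesis unfolding w_def by (rule someI_ex[where P = "\<lambda>y. 0 \<le> y \<and> y < p ^ n \<and> [x n * y = 1] (mod p ^ n)", OF exE]) auto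
  qed
  have "w (Suc n) mod p ^ n = w n" for n
  proof -
    have d: "p ^ n dvd p ^ Suc n" by (simp add: le_imp_power_dvd)
    have "[x (Suc n) * w (Suc n) = 1] (mod p ^ n)" using w[of "Suc n"] cong_dvd_modulus d by blast
    moreover have "[x (Suc n) * w (Suc n) = x n * w (Suc n)] (mod p ^ n)"
      by (rule cong_scalar_right[OF Zp_Suc_cong[OF x]])
    ultimately have "[x n * w (Suc n) = 1] (mod p ^ n)" using cong_sym cong_trans by blast
    then have "[w (Suc n) = w n] (mod p ^ n)" using inv_unique w by blast
    then show ?thesis using w[of n] by (simp add: cong_def)
  qed
  then have "w \<in> Zp p" unfolding Zp_def using w by auto
  then show ?thesis using w by blast
qed

lemma zdiv_ex:
  assumes x: "x \<in> Zp p" and v: "x v = 0"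
  shows "\<exists>y\<in>Zp p. \<forall>n. [x n = p ^ v * y n] (mod p ^ n)"
proof -
  define Q where "Q n = x (n + v) div p ^ v" for n
  have Q: "x (n + v) = p ^ v * Q n" for n
  proof -
    have "x (n + v) mod p ^ v = 0" using Zp_le[OF x, of v "n + v"] v by simp
    then show ?thesis unfolding Q_def by (metis add.right_neutral mult_div_mod_eq)
  qed
  have "[Q (Suc n) = Q n] (mod p ^ n)" for n
  proof -
    have "[x (Suc (n + v)) = x (n + v)] (mod p ^ (n + v))" using Zp_Suc_cong[OF x, of "n + v"] by simp
    moreover have "x (Suc (n + v)) = p ^ v * Q (Suc n)" using Q[of "Suc n"] by simp
    ultimately have "[p ^ v * Q (Suc n) = p ^ v * Q n] (mod p ^ v * p ^ n)"
      using Q[of n] by (simp add: power_add mult.commute)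
    then have "p ^ v * p ^ n dvd p ^ v * Q (Suc n) - p ^ v * Q n" by (simp add: cong_iff_dvd_diff)
    then have "p ^ v * p ^ n dvd p ^ v * (Q (Suc n) - Q n)" by (simp add: right_diff_distrib)
    then have "p ^ n dvd (Q (Suc n) - Q n)" using pow_pos[of v] p_gt1 by simp
    then show ?thesis by (simp add: cong_iff_dvd_diff)
  qed
  then have yZ: "(\<lambda>n. Q n mod p ^ n) \<in> Zp p" by (rule Zp_intro)
  have "[x n = p ^ v * (Q n mod p ^ n)] (mod p ^ n)" for n
  proof -
    have "[x n = x (n + v)] (mod p ^ n)" using Zp_cong_le[OF x, of n "n + v"] by (simp add: cong_sym)
    also have "x (n + v) = p ^ v * Q n" by (rule Q)
    also have "[p ^ v * Q n = p ^ v * (Q n mod p ^ n)] (mod p ^ n)"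
      by (rule cong_scalar_left) (simp add: cong_def)
    finally show ?thesis .
  qed
  then show ?thesis using yZ by (intro bexI[of _ "\<lambda>n. Q n mod p ^ n"]) auto
qed

definition val :: "zp \<Rightarrow> nat" where "val x = (LEAST n. x (Suc n) \<noteq> 0)"

lemma val_props:
  assumes x: "x \<in> Zp p" and nz: "x \<noteq> zero_zp"
  shows "x (Suc (val x)) \<noteq> 0" "\<And>n. n \<le> val x \<Longrightarrow> x n = 0"
proof -
  obtain n where n: "x n \<noteq> 0" using nz by (auto simp: zero_zp_def fun_eq_iff)
  have "x 0 = 0" using ZpD[OF x, of 0] by simp
  then have "n \<noteq> 0" using n by (metis)
  then obtain k where "x (Suc k) \<noteq> 0" using n by (cases n) auto
  then show "x (Suc (val x)) \<noteq> 0" unfolding val_def by (rule LeastI)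
  fix n assume "n \<le> val x"
  show "x n = 0"
  proof (cases n)
    case 0 then show ?thesis using ZpD[OF x, of 0] by auto
  next
    case (Suc k)
    have "k < val x" using \<open>n \<le> val x\<close> Suc by simp
    then show ?thesis unfolding val_def Suc using not_less_Least by blast
  qed
qed

lemma quot_unit:
  assumes x: "x \<in> Zp p" and y: "y \<in> Zp p" and xv: "x (Suc v) \<noteq> 0"
    and q: "\<And>n. [x n = p ^ v * y n] (mod p ^ n)"
  shows "y 1 \<noteq> 0"
proof
  assume "y 1 = 0"
  then have "y (Suc v) mod p = 0" using Zp_le[OF y, of 1 "Suc v"] by simp
  then have "p dvd y (Suc v)" by (simp add: dvd_eq_mod_eq_0)
  then have "p ^ Suc v dvd p ^ v * y (Suc v)" by (simp add: mult_dvd_mono)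
  then have "[p ^ v * y (Suc v) = 0] (mod p ^ Suc v)" by (simp add: cong_0_iff)
  then have "[x (Suc v) = 0] (mod p ^ Suc v)" using q[of "Suc v"] cong_trans by blast
  then show False using xv Zp_mod[OF x, of "Suc v"] by (simp add: cong_def)
qed

lemma torsion_free:
  assumes x: "x \<in> Zp p" and h: "\<And>n. [p ^ k * x n = 0] (mod p ^ n)"
  shows "x = zero_zp"
proof
  fix n
  have "p ^ k * p ^ n dvd p ^ k * x (n + k)" using h[of "n + k"]
    by (simp add: cong_0_iff power_add mult.commute)
  then have "p ^ n dvd x (n + k)" using pow_pos[of k] p_gt1 by simp
  then have "x (n + k) mod p ^ n = 0" by simp
  then show "x n = zero_zp n" using Zp_le[OF x, of n "n + k"] by (simp add: zero_zp_def)
qed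

lemma vtorsion_free:
  assumes v: "v \<in> Zpvec p d" and h: "vsmul p (pk p k) v = vzero"
  shows "v = vzero"
proof (rule ext)
  fix i show "v i = vzero i"
  proof (cases "i < d")
    case True
    have "[p ^ k * v i n = 0] (mod p ^ n)" for n
      using fun_cong[OF fun_cong[OF h, of i], of n]
      by (simp add: vsmul_def zmul_def pk_def zof_int_def vzero_def cong_def mod_mult_left_eq)
    then have "v i = zero_zp" by (rule torsion_free[OF Zpvec_D[OF v True]])
    then show ?thesis by (simp add: zero_zp_def vzero_def)
  next
    case False then show ?thesis using Zpvec_D2[OF v] by (simp add: vzero_def)
  qed
qed

end


definition ebasis :: "int \<Rightarrow> nat \<Rightarrow> (nat \<Rightarrow> zvec) \<Rightarrow> bool" where
  "ebasis p d E \<longleftrightarrow> (\<forall>j<d. E j \<in> Zpvec p d) \<and>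
     (\<forall>x\<in>Zpvec p d. \<exists>c. (\<forall>j<d. c j \<in> Zp p) \<and> x = lc p d c E) \<and>
     (\<forall>c c'. (\<forall>j<d. c j \<in> Zp p) \<longrightarrow> (\<forall>j<d. c' j \<in> Zp p) \<longrightarrow> lc p d c E = lc p d c' E
        \<longrightarrow> (\<forall>j<d. c j = c' j))"

definition std :: "int \<Rightarrow> nat \<Rightarrow> zvec" where
  "std p j = (\<lambda>i. if i = j then zof_int p 1 else zero_zp)"

definition sw :: "nat \<Rightarrow> nat \<Rightarrow> nat \<Rightarrow> nat" where
  "sw a b j = (if j = a then b else if j = b then a else j)"

lemmas modsimps = mod_add_left_eq mod_add_right_eq mod_mult_left_eq mod_mult_right_eq mod_minus_eq
  mod_diff_left_eq mod_diff_right_eq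

context pz begin

lemma std_Zpvec: "j < d \<Longrightarrow> std p j \<in> Zpvec p d"
  unfolding Zpvec_def std_def by (auto simp: zero_zp_def)

lemma lc_std: "lc p d c (std p) i n = (if i < d then c i n mod p ^ n else 0)"
proof -
  have "(\<Sum>l<d. c l n * std p l i n) = (\<Sum>l<d. if l = i then c i n * (1 mod p ^ n) else 0)"
    by (rule sum.cong) (auto simp: std_def zof_int_def zero_zp_def)
  also have "\<dots> = (if i < d then c i n * (1 mod p ^ n) else 0)" by (subst sum.delta) auto
  finally show ?thesis by (simp add: lc_def mod_mult_right_eq)
qed

lemma ebasis_std: "ebasis p d (std p)"
  unfolding ebasis_def
proof (intro conjI allI impI ballI)
  fix j assume "j < d" then show "std p j \<in> Zpvec p d" by (rule std_Zpvec)
next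
  fix x assume x: "x \<in> Zpvec p d"
  have "x = lc p d (\<lambda>j. x j) (std p)"
  proof (rule vec_eqI)
    show "nv p x" using x by (rule Zpvec_nv)
  next
    fix i n show "[x i n = lc p d x (std p) i n] (mod p ^ n)"
      using Zpvec_D2[OF x, of i] by (auto simp: lc_std cong_def)
  qed simp
  then show "\<exists>c. (\<forall>j<d. c j \<in> Zp p) \<and> x = lc p d c (std p)" using Zpvec_D[OF x] by blast
next
  fix c c' j assume c: "\<forall>j<d. c j \<in> Zp p" and c': "\<forall>j<d. c' j \<in> Zp p"
    and e: "lc p d c (std p) = lc p d c' (std p)" and j: "j < d"
  show "c j = c' j"
  proof (rule Zp_eqI)
    fix n show "[c j n = c' j n] (mod p ^ n)"
      using fun_cong[OF fun_cong[OF e, of j], of n] j by (simp add: lc_std cong_def)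
  qed (use c c' j in auto)
qed

lemma sum_sw: assumes "a < d" "b < d" shows "(\<Sum>j<d. f (sw a b j)) = (\<Sum>j<d. f j)"
  by (rule sum.reindex_bij_witness[of _ "sw a b" "sw a b"]) (use assms in \<open>auto simp: sw_def\<close>)

lemma sw_sw[simp]: "sw a b (sw a b j) = j" by (auto simp: sw_def)

lemma lc_sw: assumes "a < d" "b < d" shows "lc p d c (E \<circ> sw a b) = lc p d (c \<circ> sw a b) E"
proof -
  have "(\<Sum>j<d. c j n * E (sw a b j) i n) = (\<Sum>j<d. c (sw a b j) n * E j i n)" for i n
    using sum_sw[OF assms, of "\<lambda>j. c (sw a b j) n * E j i n"] by simp
  then show ?thesis by (simp add: lc_def)
qed

lemma sw_lt: "a < d \<Longrightarrow> b < d \<Longrightarrow> j < d \<Longrightarrow> sw a b j < d" by (auto simp: sw_def)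

lemma ebasisD:
  assumes "ebasis p d E"
  shows "\<And>j. j < d \<Longrightarrow> E j \<in> Zpvec p d"
    "\<And>x. x \<in> Zpvec p d \<Longrightarrow> \<exists>c. (\<forall>j<d. c j \<in> Zp p) \<and> x = lc p d c E"
    "\<And>c c' j. (\<forall>j<d. c j \<in> Zp p) \<Longrightarrow> (\<forall>j<d. c' j \<in> Zp p) \<Longrightarrow> lc p d c E = lc p d c' E
        \<Longrightarrow> j < d \<Longrightarrow> c j = c' j"
  using assms unfolding ebasis_def by blast+

lemma ebasisI:
  assumes "\<And>j. j < d \<Longrightarrow> E j \<in> Zpvec p d"
    "\<And>x. x \<in> Zpvec p d \<Longrightarrow> \<exists>c. (\<forall>j<d. c j \<in> Zp p) \<and> x = lc p d c E"
    "\<And>c c' j. (\<forall>j<d. c j \<in> Zp p) \<Longrightarrow> (\<forall>j<d. c' j \<in> Zp p) \<Longrightarrow> lc p d c E = lc p d c' E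
        \<Longrightarrow> j < d \<Longrightarrow> c j = c' j"
  shows "ebasis p d E"
  using assms unfolding ebasis_def by blast

lemma ebasis_sw: assumes E: "ebasis p d E" and ab: "a < d" "b < d" shows "ebasis p d (E \<circ> sw a b)"
proof (rule ebasisI)
  fix j assume "j < d" then show "(E \<circ> sw a b) j \<in> Zpvec p d"
    using ebasisD(1)[OF E, of "sw a b j"] sw_lt[OF ab] by simp
next
  fix x assume x: "x \<in> Zpvec p d"
  then obtain c where c: "\<forall>j<d. c j \<in> Zp p" "x = lc p d c E" using ebasisD(2)[OF E] by blast
  have "lc p d (c \<circ> sw a b) (E \<circ> sw a b) = lc p d (c \<circ> sw a b \<circ> sw a b) E" by (rule lc_sw[OF ab])
  also have "c \<circ> sw a b \<circ> sw a b = c" by (rule ext) simp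
  finally have "x = lc p d (c \<circ> sw a b) (E \<circ> sw a b)" using c(2) by (simp only:)
  moreover have "\<forall>j<d. (c \<circ> sw a b) j \<in> Zp p" using c(1) sw_lt[OF ab] by simp
  ultimately show "\<exists>c. (\<forall>j<d. c j \<in> Zp p) \<and> x = lc p d c (E \<circ> sw a b)" by blast
next
  fix c c' j assume c: "\<forall>j<d. c j \<in> Zp p" and c': "\<forall>j<d. c' j \<in> Zp p"
    and e: "lc p d c (E \<circ> sw a b) = lc p d c' (E \<circ> sw a b)" and j: "j < d"
  have e2: "lc p d (c \<circ> sw a b) E = lc p d (c' \<circ> sw a b) E" using e by (simp only: lc_sw[OF ab])
  have z1: "\<forall>j<d. (c \<circ> sw a b) j \<in> Zp p" using c sw_lt[OF ab] by simp
  have z2: "\<forall>j<d. (c' \<circ> sw a b) j \<in> Zp p" using c' sw_lt[OF ab] by simp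
  have "(c \<circ> sw a b) (sw a b j) = (c' \<circ> sw a b) (sw a b j)"
    by (rule ebasisD(3)[OF E z1 z2 e2 sw_lt[OF ab j]])
  then show "c j = c' j" by simp
qed

lemma sum_split_k:
  fixes k d :: nat
  assumes "k < d"
  shows "(\<Sum>j<d. (if j = k then X else Y j)) = (\<Sum>j<d. (if j = k then 0 else Y j)) + (X::int)"
proof -
  have "(\<Sum>j<d. (if j = k then X else Y j)) = (\<Sum>j<d. (if j = k then 0 else Y j) + (if j = k then X else 0))"
    by (rule sum.cong) auto
  also have "\<dots> = (\<Sum>j<d. (if j = k then 0 else Y j)) + (\<Sum>j<d. (if j = k then X else 0))"
    by (simp add: sum.distrib)
  also have "(\<Sum>j<d. (if j = k then X else 0)) = X" using assms by simp
  finally show ?thesis .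
qed

lemma lc_apply: "lc p m c B i n = (\<Sum>j<m. c j n * B j i n) mod p ^ n" by (simp add: lc_def)

lemma lc_subst:
  assumes k: "k < d"
  shows "lc p d g (E(k := lc p d cc E)) =
         lc p d (\<lambda>j. zadd p (if j = k then zero_zp else g j) (zmul p (g k) (cc j))) E"
proof (rule vec_eqI)
  fix i n
  let ?q = "p ^ n"
  let ?S = "\<Sum>l<d. cc l n * E l i n"
  let ?H = "\<Sum>j<d. (if j = k then 0 else g j n) * E j i n"
  have "(\<Sum>j<d. g j n * (E(k := lc p d cc E)) j i n)
        = (\<Sum>j<d. if j = k then g k n * (?S mod ?q) else g j n * E j i n)"
    by (rule sum.cong) (auto simp: lc_def)
  also have "\<dots> = (\<Sum>j<d. (if j = k then 0 else g j n * E j i n)) + g k n * (?S mod ?q)"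
    by (rule sum_split_k[OF k])
  also have "(\<Sum>j<d. (if j = k then 0 else g j n * E j i n)) = ?H"
    by (rule sum.cong) auto
  finally have L: "(\<Sum>j<d. g j n * (E(k := lc p d cc E)) j i n) = ?H + g k n * (?S mod ?q)" .
  have "[?H + g k n * (?S mod ?q) = ?H + g k n * ?S] (mod ?q)"
    by (intro cong_add cong_scalar_left) (auto simp: cong_def)
  also have "?H + g k n * ?S = (\<Sum>j<d. ((if j = k then 0 else g j n) + g k n * cc j n) * E j i n)"
    by (simp add: sum.distrib sum_distrib_left distrib_right mult.assoc)
  also have "[\<dots> = (\<Sum>j<d. zadd p (if j = k then zero_zp else g j) (zmul p (g k) (cc j)) n * E j i n)] (mod ?q)"
    by (intro cong_sum cong_scalar_right)
       (auto simp: zadd_def zmul_def zero_zp_def cong_def modsimps)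
  finally have C: "[?H + g k n * (?S mod ?q) = (\<Sum>j<d. zadd p (if j = k then zero_zp else g j) (zmul p (g k) (cc j)) n * E j i n)] (mod ?q)" .
  show "[lc p d g (E(k := lc p d cc E)) i n =
         lc p d (\<lambda>j. zadd p (if j = k then zero_zp else g j) (zmul p (g k) (cc j))) E i n] (mod ?q)"
    unfolding lc_apply[of d g] lc_apply[of d "\<lambda>j. zadd p (if j = k then zero_zp else g j) (zmul p (g k) (cc j))"] L
    using C by (simp add: cong_def)
qed simp_all


lemma cancel_unit:
  assumes "[a * c = b * c] (mod m)" "[c * w = 1] (mod m)" shows "[a = (b::int)] (mod m)"
proof -
  have "[a * c * w = b * c * w] (mod m)" using assms(1) by (rule cong_scalar_right)
  moreover have "[a * (c * w) = a * 1] (mod m)" using assms(2) by (rule cong_scalar_left)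
  moreover have "[b * (c * w) = b * 1] (mod m)" using assms(2) by (rule cong_scalar_left)
  ultimately show ?thesis by (simp add: cong_def mult.assoc)
qed

lemma ebasis_exchange:
  assumes E: "ebasis p d E" and k: "k < d" and cc: "\<forall>j<d. cc j \<in> Zp p" and u: "cc k 1 \<noteq> 0"
  shows "ebasis p d (E(k := lc p d cc E))"
proof -
  obtain w where w: "w \<in> Zp p" "\<forall>n. [cc k n * w n = 1] (mod p ^ n)"
    using unit_inv[of "cc k", OF _ u] cc k by blast
  let ?E' = "E(k := lc p d cc E)"
  define D where "D g = (\<lambda>j. zadd p (if j = k then zero_zp else g j) (zmul p (g k) (cc j)))" for g
  have sub: "lc p d g ?E' = lc p d (D g) E" for g unfolding D_def by (rule lc_subst[OF k])
  have DZ: "\<forall>j<d. D g j \<in> Zp p" if "\<forall>j<d. g j \<in> Zp p" for g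
    using that cc k by (auto simp: D_def)
  show ?thesis
  proof (rule ebasisI)
    fix j assume j: "j < d"
    show "?E' j \<in> Zpvec p d"
    proof (cases "j = k")
      case True
      then show ?thesis using cc ebasisD(1)[OF E] by (auto intro!: lc_Zpvec)
    next
      case False
      then show ?thesis using ebasisD(1)[OF E j] by simp
    qed
  next
    fix x assume x: "x \<in> Zpvec p d"
    obtain \<gamma> where ga: "\<forall>j<d. \<gamma> j \<in> Zp p" "x = lc p d \<gamma> E" using ebasisD(2)[OF E x] by blast
    define g where "g j = (if j = k then zmul p (\<gamma> k) w
        else zadd p (\<gamma> j) (zneg p (zmul p (zmul p (\<gamma> k) w) (cc j))))" for j
    have gZ: "\<forall>j<d. g j \<in> Zp p" using ga(1) w(1) cc k by (auto simp: g_def)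
    have "lc p d g ?E' = lc p d (D g) E" by (rule sub)
    also have "\<dots> = lc p d \<gamma> E"
    proof (rule lc_cong_coef)
      fix j n assume j: "j < d"
      show "[D g j n = \<gamma> j n] (mod p ^ n)"
      proof (cases "j = k")
        case True
        have h: "(\<gamma> k n * (cc k n * w n)) mod p ^ n = \<gamma> k n mod p ^ n"
          using cong_scalar_left[OF w(2)[rule_format, of n], of "\<gamma> k n"] by (simp add: cong_def)
        show ?thesis using True h
          by (simp add: D_def g_def zadd_def zmul_def zero_zp_def cong_def modsimps ac_simps)
      next
        case False
        then show ?thesis
          by (simp add: D_def g_def zadd_def zmul_def zneg_def cong_def modsimps)
      qed
    qed
    finally have "x = lc p d g ?E'" using ga(2) by simp
    then show "\<exists>c. (\<forall>j<d. c j \<in> Zp p) \<and> x = lc p d c ?E'" using gZ by blast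
  next
    fix g g' j assume gZ: "\<forall>j<d. g j \<in> Zp p" and g'Z: "\<forall>j<d. g' j \<in> Zp p"
      and e: "lc p d g ?E' = lc p d g' ?E'" and j: "j < d"
    have "lc p d (D g) E = lc p d (D g') E" using e sub by simp
    then have DD: "D g i = D g' i" if "i < d" for i
      using ebasisD(3)[OF E DZ[OF gZ] DZ[OF g'Z] _ that] by blast
    have gk: "g k = g' k"
    proof (rule Zp_eqI)
      fix n
      have "D g k n = D g' k n" using DD[OF k] by simp
      then have "[g k n * cc k n = g' k n * cc k n] (mod p ^ n)"
        by (simp add: D_def zadd_def zmul_def zero_zp_def cong_def)
      then show "[g k n = g' k n] (mod p ^ n)" using cancel_unit w(2) by blast
    qed (use gZ g'Z k in auto)
    show "g j = g' j"
    proof (cases "j = k")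
      case True then show ?thesis using gk by simp
    next
      case False
      show ?thesis
      proof (rule Zp_eqI)
        fix n
        have "D g j n = D g' j n" using DD[OF j] by simp
        then have "[g j n + (g k n * cc j n) mod p ^ n = g' j n + (g k n * cc j n) mod p ^ n] (mod p ^ n)"
          using False gk by (simp add: D_def zadd_def zmul_def cong_def)
        then show "[g j n = g' j n] (mod p ^ n)" by (simp add: cong_add_rcancel)
      qed (use gZ g'Z j in auto)
    qed
  qed
qed

end


definition indep :: "int \<Rightarrow> nat \<Rightarrow> (nat \<Rightarrow> zvec) \<Rightarrow> bool" where
  "indep p m B \<longleftrightarrow> (\<forall>c. (\<forall>j<m. c j \<in> Zp p) \<longrightarrow> lc p m c B = vzero \<longrightarrow> (\<forall>j<m. c j = zero_zp))"

definition mone :: "int \<Rightarrow> zp" where "mone q = zneg q (zof_int q 1)"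

context pz begin

lemma lc_0[simp]: "lc p 0 c B = vzero" by (simp add: lc_def vzero_def)

lemma span_0: "span p 0 B = {vzero}" unfolding span_def by auto

lemma zneg_pk_nz: "zneg p (pk p N) \<noteq> zero_zp"
proof
  assume a: "zneg p (pk p N) = zero_zp"
  have "zneg p (pk p N) (Suc N) = 0" using a by (simp add: zero_zp_def)
  moreover have "zneg p (pk p N) (Suc N) = (- (p ^ N mod p ^ Suc N)) mod p ^ Suc N"
    by (simp only: zneg_def pk_def zof_int_def)
  ultimately have h: "(- (p ^ N mod p ^ Suc N)) mod p ^ Suc N = 0" by linarith
  have "p ^ N < p ^ Suc N" using p_gt1 by simp
  then have eqm: "p ^ N mod p ^ Suc N = p ^ N" using pow_pos[of N] by simp
  have "(- (p ^ N)) mod p ^ Suc N = 0" using h unfolding eqm .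
  then have "p ^ Suc N dvd - (p ^ N)" by (simp only: dvd_eq_mod_eq_0)
  then have "p ^ N * p dvd p ^ N * 1" by (simp add: mult.commute)
  then have "p dvd 1" using pow_pos[of N] p_gt1 by simp
  then show False using p_gt1 by simp
qed

lemma lc_in_span_closed:
  assumes "\<And>j. j < m \<Longrightarrow> B j \<in> span p m' E" "\<And>j. j < m \<Longrightarrow> c j \<in> Zp p"
  shows "lc p m c B \<in> span p m' E"
  using assms
proof (induction m)
  case 0 then show ?case by (simp add: span_vzero)
next
  case (Suc m)
  show ?case unfolding lc_Suc
    by (intro span_add span_smul Suc.IH) (use Suc.prems in auto)
qed

lemma span_subset_span:
  assumes "\<And>j. j < m \<Longrightarrow> B j \<in> span p m' E" shows "span p m B \<subseteq> span p m' E"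
proof
  fix x assume "x \<in> span p m B"
  then obtain c where c: "\<forall>j<m. c j \<in> Zp p" "x = lc p m c B" using spanD by blast
  show "x \<in> span p m' E" unfolding c(2) by (rule lc_in_span_closed) (use assms c in auto)
qed

lemma span_eq_lt: assumes "\<And>j. j < m \<Longrightarrow> B j = B' j" shows "span p m B = span p m B'"
proof -
  have "lc p m c B = lc p m c B'" for c by (rule lc_eq_lt) (use assms in auto)
  then show ?thesis unfolding span_def by simp
qed

lemma mone_Zp[simp]: "mone p \<in> Zp p" by (simp add: mone_def)

lemma vadd_cancel: assumes "nv p w" shows "vadd p (vadd p u w) (vsmul p (mone p) u) = w"
proof (rule vec_eqI)
  fix i n
  have "[(u i n + w i n) + (- 1) * u i n = w i n] (mod p ^ n)" by simp
  then show "[vadd p (vadd p u w) (vsmul p (mone p) u) i n = w i n] (mod p ^ n)"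
    by (simp add: vadd_def vsmul_def zadd_def zmul_def mone_def zneg_def zof_int_def cong_def modsimps)
qed (use assms in simp_all)

lemma span_cancel:
  assumes "vadd p u w \<in> span p m B" "u \<in> span p m B" "nv p w" shows "w \<in> span p m B"
  using span_add[OF assms(1) span_smul[OF mone_Zp assms(2)]] vadd_cancel[OF assms(3)] by simp

lemma vsmul_pk0: "nv p x \<Longrightarrow> vsmul p (pk p 0) x = x"
  using vsmul_one by (simp add: pk_def)

lemma sat_lemma:
  assumes E: "ebasis p d E" and md: "m \<le> d" and x: "x \<in> Zpvec p d"
    and h: "vsmul p (pk p k) x \<in> span p m E"
  shows "x \<in> span p m E"
proof -
  obtain \<gamma> where ga: "\<forall>j<d. \<gamma> j \<in> Zp p" "x = lc p d \<gamma> E" using ebasisD(2)[OF E x] by blast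
  obtain \<delta> where de: "\<forall>j<m. \<delta> j \<in> Zp p" "vsmul p (pk p k) x = lc p m \<delta> E" using spanD[OF h] by blast
  let ?\<delta> = "\<lambda>j. if j < m then \<delta> j else zero_zp"
  have "lc p d (\<lambda>j. zmul p (pk p k) (\<gamma> j)) E = vsmul p (pk p k) x" using ga(2) by (simp add: lc_smul)
  also have "\<dots> = lc p m ?\<delta> E" using de(2) by (auto intro: lc_eq_lt)
  also have "\<dots> = lc p d ?\<delta> E" by (rule lc_extend[symmetric]) (use md in auto)
  finally have eq: "lc p d (\<lambda>j. zmul p (pk p k) (\<gamma> j)) E = lc p d ?\<delta> E" .
  have z: "\<gamma> j = zero_zp" if "m \<le> j" "j < d" for j
  proof -
    have "zmul p (pk p k) (\<gamma> j) = ?\<delta> j"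
      by (rule ebasisD(3)[OF E _ _ eq \<open>j < d\<close>]) (use ga(1) de(1) in auto)
    then have "zmul p (pk p k) (\<gamma> j) = zero_zp" using that by simp
    then have "[p ^ k * \<gamma> j n = 0] (mod p ^ n)" for n
    proof -
      assume "zmul p (pk p k) (\<gamma> j) = zero_zp"
      then have "zmul p (pk p k) (\<gamma> j) n = 0" by (simp add: zero_zp_def)
      then show ?thesis by (simp add: zmul_def pk_def zof_int_def cong_def mod_mult_left_eq)
    qed
    then show ?thesis using torsion_free ga(1) that by blast
  qed
  have "x = lc p m \<gamma> E" using ga(2) lc_extend[OF md, of \<gamma> E] z by simp
  then show ?thesis using ga(1) md by (auto intro!: lc_in_span)
qed

lemma zmul_comm: "zmul p a b = zmul p b a" by (simp add: zmul_def mult.commute)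

end

context pz begin

lemma indep_Suc: assumes "indep p (Suc m) B" shows "indep p m B"
  unfolding indep_def
proof (intro allI impI)
  fix c j assume cZ: "\<forall>j<m. c j \<in> Zp p" and e: "lc p m c B = vzero" and "j < m"
  let ?c = "c(m := zero_zp)"
  have "lc p (Suc m) ?c B = lc p m ?c B" by (rule lc_extend) auto
  also have "\<dots> = lc p m c B" by (rule lc_eq_lt) auto
  finally have "lc p (Suc m) ?c B = vzero" using e by simp
  moreover have "\<forall>j<Suc m. ?c j \<in> Zp p" using cZ by (auto simp: less_Suc_eq)
  ultimately have h: "\<forall>j<Suc m. ?c j = zero_zp" using assms unfolding indep_def by blast
  have jm: "j < Suc m" "j \<noteq> m" using \<open>j < m\<close> by auto
  have "?c j = zero_zp" using h jm(1) by blast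
  then show "c j = zero_zp" using jm(2) by simp
qed

lemma main_ind:
  "(\<forall>j<m. B j \<in> Zpvec p d) \<Longrightarrow> indep p m B \<Longrightarrow>
   \<exists>E N. ebasis p d E \<and> m \<le> d \<and>
     (\<forall>x\<in>Zpvec p d. (\<exists>k. vsmul p (pk p k) x \<in> span p m B) \<longrightarrow> x \<in> span p m E) \<and>
     (\<forall>x\<in>span p m E. vsmul p (pk p N) x \<in> span p m B)"
proof (induction m)
  case 0
  have "\<forall>x\<in>Zpvec p d. (\<exists>k. vsmul p (pk p k) x \<in> span p 0 B) \<longrightarrow> x \<in> span p 0 (std p)"
    using vtorsion_free by (auto simp: span_0)
  moreover have "\<forall>x\<in>span p 0 (std p). vsmul p (pk p 0) x \<in> span p 0 B"
    by (simp add: span_0 vsmul_vzero)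
  ultimately show ?case using ebasis_std by blast
next
  case (Suc m)
  have Bv: "\<forall>j<m. B j \<in> Zpvec p d" using Suc.prems(1) by auto
  obtain E' N' where IH: "ebasis p d E'" "m \<le> d"
     "\<forall>x\<in>Zpvec p d. (\<exists>k. vsmul p (pk p k) x \<in> span p m B) \<longrightarrow> x \<in> span p m E'"
     "\<forall>x\<in>span p m E'. vsmul p (pk p N') x \<in> span p m B"
    using Suc.IH[OF Bv indep_Suc[OF Suc.prems(2)]] by blast
  define \<beta> where "\<beta> = B m"
  have \<beta>v: "\<beta> \<in> Zpvec p d" using Suc.prems(1) \<beta>_def by simp
  obtain c where c: "\<forall>j<d. c j \<in> Zp p" "\<beta> = lc p d c E'" using ebasisD(2)[OF IH(1) \<beta>v] by blast
  have BinS: "B j \<in> span p (Suc m) B" if "j < Suc m" for j using span_gen that Suc.prems(1) by blast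
  define J where "J = {j. m \<le> j \<and> j < d \<and> c j \<noteq> zero_zp}"
  have Jne: "J \<noteq> {}"
  proof
    assume J0: "J = {}"
    have cz: "c j = zero_zp" if "m \<le> j" "j < d" for j using J0 that unfolding J_def by blast
    have "\<beta> = lc p m c E'" using c(2) lc_extend[OF IH(2), of c E'] cz by simp
    then have "\<beta> \<in> span p m E'" using c(1) IH(2) by (auto intro!: lc_in_span)
    then have "vsmul p (pk p N') \<beta> \<in> span p m B" using IH(4) by blast
    then obtain \<alpha> where al: "\<forall>j<m. \<alpha> j \<in> Zp p" "vsmul p (pk p N') \<beta> = lc p m \<alpha> B"
      using spanD by blast
    define \<alpha>' where "\<alpha>' = \<alpha>(m := zneg p (pk p N'))"
    have "lc p (Suc m) \<alpha>' B = vadd p (lc p m \<alpha>' B) (vsmul p (\<alpha>' m) (B m))" by (rule lc_Suc)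
    also have "lc p m \<alpha>' B = lc p m \<alpha> B" unfolding \<alpha>'_def by (rule lc_eq_lt) auto
    moreover have "\<alpha>' m = zneg p (pk p N')" by (simp add: \<alpha>'_def)
    ultimately have "lc p (Suc m) \<alpha>' B = vadd p (vsmul p (pk p N') \<beta>) (vsmul p (zneg p (pk p N')) \<beta>)"
      using al(2) \<beta>_def by simp
    also have "\<dots> = vzero"
    proof (rule vec_eqI)
      fix i n
      have "[p ^ N' * \<beta> i n + (- (p ^ N')) * \<beta> i n = 0] (mod p ^ n)" by simp
      then show "[vadd p (vsmul p (pk p N') \<beta>) (vsmul p (zneg p (pk p N')) \<beta>) i n = vzero i n] (mod p ^ n)"
        by (simp add: vadd_def vsmul_def zmul_def zadd_def zneg_def pk_def zof_int_def vzero_def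
            cong_def modsimps)
    qed simp_all
    finally have "lc p (Suc m) \<alpha>' B = vzero" .
    moreover have "\<forall>j<Suc m. \<alpha>' j \<in> Zp p" using al(1) by (auto simp: \<alpha>'_def less_Suc_eq)
    ultimately have "\<alpha>' m = zero_zp" using Suc.prems(2) unfolding indep_def by blast
    then show False using zneg_pk_nz \<alpha>'_def by simp
  qed
  have Jfin: "finite J" unfolding J_def by (rule finite_subset[of _ "{..<d}"]) auto
  define v where "v = Min ((\<lambda>j. val (c j)) ` J)"
  have "v \<in> (\<lambda>j. val (c j)) ` J" unfolding v_def using Jfin Jne by (intro Min_in) auto
  then obtain j0 where j0: "j0 \<in> J" "val (c j0) = v" by blast
  have vle: "v \<le> val (c j)" if "j \<in> J" for j using Min_le Jfin that unfolding v_def by auto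
  have cv: "c j v = 0" if "m \<le> j" "j < d" for j
  proof (cases "c j = zero_zp")
    case True then show ?thesis by (simp add: zero_zp_def)
  next
    case False then have "j \<in> J" using that J_def by auto
    then show ?thesis using val_props(2)[OF c(1)[rule_format, OF \<open>j<d\<close>] False vle] by blast
  qed
  have j0d: "m \<le> j0" "j0 < d" "c j0 \<noteq> zero_zp" using j0 J_def by auto
  have c0: "c j0 (Suc v) \<noteq> 0" using val_props(1)[of "c j0"] c(1) j0d j0(2) by auto
  define cq where "cq j = (if m \<le> j \<and> j < d then
      (SOME y. y \<in> Zp p \<and> (\<forall>n. [c j n = p ^ v * y n] (mod p ^ n))) else zero_zp)" for j
  have cqp: "cq j \<in> Zp p \<and> (\<forall>n. [c j n = p ^ v * cq j n] (mod p ^ n))" if "m \<le> j" "j < d" for j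
  proof -
    have "\<exists>y. y \<in> Zp p \<and> (\<forall>n. [c j n = p ^ v * y n] (mod p ^ n))"
      using zdiv_ex[OF c(1)[rule_format, OF \<open>j<d\<close>] cv[OF that]] by blast
    then have "(SOME y. y \<in> Zp p \<and> (\<forall>n. [c j n = p ^ v * y n] (mod p ^ n))) \<in> Zp p \<and>
      (\<forall>n. [c j n = p ^ v * (SOME y. y \<in> Zp p \<and> (\<forall>n. [c j n = p ^ v * y n] (mod p ^ n))) n] (mod p ^ n))"
      by (rule someI_ex)
    then show ?thesis unfolding cq_def using that by simp
  qed
  have cqZ: "\<forall>j<d. cq j \<in> Zp p" using cqp by (auto simp: cq_def)
  have cqlo: "cq j = zero_zp" if "j < m" for j using that cq_def by auto
  have cq0: "cq j0 1 \<noteq> 0"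
    using quot_unit[OF c(1)[rule_format,OF j0d(2)] _ c0] cqp[OF j0d(1,2)] by blast
  define a where "a = lc p d cq E'"
  define E where "E = (E'(j0 := a)) \<circ> sw j0 m"
  have md: "m < d" using j0d by simp
  have Ebas: "ebasis p d E" unfolding E_def a_def
    by (rule ebasis_sw[OF ebasis_exchange[OF IH(1) j0d(2) cqZ cq0] j0d(2) md])
  have Elo: "E j = E' j" if "j < m" for j using that j0d by (auto simp: E_def sw_def)
  have Em: "E m = a" by (simp add: E_def sw_def)
  define clo where "clo j = (if j < m then c j else zero_zp)" for j
  have beta: "\<beta> = vadd p (lc p m c E') (vsmul p (pk p v) a)"
  proof -
    have "lc p d c E' = lc p d (\<lambda>j. zadd p (clo j) (zmul p (pk p v) (cq j))) E'"
    proof (rule lc_cong_coef)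
      fix j n assume "j < d"
      show "[c j n = zadd p (clo j) (zmul p (pk p v) (cq j)) n] (mod p ^ n)"
      proof (cases "j < m")
        case True then show ?thesis using cqlo
          by (simp add: clo_def zadd_def zmul_def zero_zp_def cong_def)
      next
        case False
        then have "[c j n = p ^ v * cq j n] (mod p ^ n)" using cqp \<open>j<d\<close> by auto
        then show ?thesis using False
          by (simp add: clo_def zadd_def zmul_def zero_zp_def pk_def zof_int_def cong_def modsimps)
      qed
    qed
    also have "\<dots> = vadd p (lc p d clo E') (lc p d (\<lambda>j. zmul p (pk p v) (cq j)) E')"
      by (rule lc_add[symmetric])
    also have "lc p d clo E' = lc p m clo E'" by (rule lc_extend[OF IH(2)]) (auto simp: clo_def)
    also have "lc p m clo E' = lc p m c E'" by (rule lc_eq_lt) (auto simp: clo_def)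
    also have "lc p d (\<lambda>j. zmul p (pk p v) (cq j)) E' = vsmul p (pk p v) a"
      unfolding a_def by (rule lc_smul[symmetric])
    finally show ?thesis using c(2) by simp
  qed
  have partII: "\<forall>x\<in>span p (Suc m) E. vsmul p (pk p (N' + v)) x \<in> span p (Suc m) B"
  proof
    fix x assume "x \<in> span p (Suc m) E"
    then obtain \<gamma> where ga: "\<forall>j<Suc m. \<gamma> j \<in> Zp p" "x = lc p (Suc m) \<gamma> E" using spanD by blast
    let ?y = "lc p m \<gamma> E'"
    have "lc p m \<gamma> E = ?y" by (rule lc_eq_lt) (use Elo in auto)
    then have xe: "x = vadd p ?y (vsmul p (\<gamma> m) a)" using ga(2) lc_Suc Em by simp
    have y1: "?y \<in> span p m E'" using ga(1) by (auto intro!: lc_in_span)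
    have y2: "vsmul p (pk p N') ?y \<in> span p (Suc m) B" using IH(4) y1 span_mono[of m "Suc m"] by auto
    have t1: "vsmul p (pk p (N' + v)) ?y \<in> span p (Suc m) B"
    proof -
      have "vsmul p (pk p (N' + v)) ?y = vsmul p (pk p v) (vsmul p (pk p N') ?y)"
        by (simp add: vsmul_pk_pk add.commute)
      then show ?thesis using span_smul[OF pk_Zp y2] by simp
    qed
    have "lc p m c E' \<in> span p m E'" using c(1) md by (auto intro!: lc_in_span)
    then have u1: "vsmul p (pk p N') (lc p m c E') \<in> span p (Suc m) B"
      using IH(4) span_mono[of m "Suc m"] by auto
    have u2: "vsmul p (pk p N') \<beta> \<in> span p (Suc m) B"
      using BinS[of m] span_smul[OF pk_Zp] \<beta>_def by simp
    have "vsmul p (pk p N') \<beta> = vadd p (vsmul p (pk p N') (lc p m c E')) (vsmul p (pk p N') (vsmul p (pk p v) a))"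
      using beta vsmul_vadd by simp
    then have u3: "vsmul p (pk p N') (vsmul p (pk p v) a) \<in> span p (Suc m) B"
      using span_cancel[OF _ u1] u2 by simp
    have t2: "vsmul p (pk p (N' + v)) (vsmul p (\<gamma> m) a) \<in> span p (Suc m) B"
    proof -
      have "zmul p (pk p (N' + v)) (\<gamma> m) = zmul p (\<gamma> m) (zmul p (pk p N') (pk p v))"
        by (simp add: zmul_pk zmul_comm)
      then have "vsmul p (pk p (N' + v)) (vsmul p (\<gamma> m) a) = vsmul p (\<gamma> m) (vsmul p (pk p N') (vsmul p (pk p v) a))"
        by (simp add: vsmul_vsmul)
      then show ?thesis using span_smul[OF _ u3] ga(1) by simp
    qed
    show "vsmul p (pk p (N' + v)) x \<in> span p (Suc m) B" unfolding xe vsmul_vadd by (rule span_add[OF t1 t2])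
  qed
  have partI: "\<forall>x\<in>Zpvec p d. (\<exists>k. vsmul p (pk p k) x \<in> span p (Suc m) B) \<longrightarrow> x \<in> span p (Suc m) E"
  proof (intro ballI impI)
    fix x assume x: "x \<in> Zpvec p d" and "\<exists>k. vsmul p (pk p k) x \<in> span p (Suc m) B"
    then obtain k where k: "vsmul p (pk p k) x \<in> span p (Suc m) B" by blast
    have sub: "span p (Suc m) B \<subseteq> span p (Suc m) E"
    proof (rule span_subset_span)
      fix j assume j: "j < Suc m"
      show "B j \<in> span p (Suc m) E"
      proof (cases "j < m")
        case True
        have Bj: "B j \<in> Zpvec p d" using Bv True by blast
        have "B j \<in> span p m B" using span_gen[of j m B, OF True Bj] .
        then have "vsmul p (pk p 0) (B j) \<in> span p m B" using vsmul_pk0 Zpvec_nv[OF Bj] by simp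
        then have "B j \<in> span p m E'" using IH(3) Bj by blast
        also have "span p m E' = span p m E" by (rule span_eq_lt) (use Elo in auto)
        also have "\<dots> \<subseteq> span p (Suc m) E" by (rule span_mono) simp
        finally show ?thesis .
      next
        case False then have jm: "j = m" using j by simp
        have "lc p (Suc m) (c(m := pk p v)) E = vadd p (lc p m (c(m := pk p v)) E) (vsmul p (pk p v) (E m))"
          by (simp add: lc_Suc)
        also have "lc p m (c(m := pk p v)) E = lc p m c E'" by (rule lc_eq_lt) (use Elo in auto)
        finally have eq1: "lc p (Suc m) (c(m := pk p v)) E = vadd p (lc p m c E') (vsmul p (pk p v) (E m))" .
        have "lc p (Suc m) (c(m := pk p v)) E = \<beta>" using eq1 unfolding Em beta[symmetric] .
        moreover have "lc p (Suc m) (c(m := pk p v)) E \<in> span p (Suc m) E"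
          by (rule lc_in_span) (use c(1) md in \<open>auto simp: less_Suc_eq\<close>)
        ultimately show ?thesis using jm \<beta>_def by simp
      qed
    qed
    show "x \<in> span p (Suc m) E" by (rule sat_lemma[OF Ebas _ x]) (use md k sub in auto)
  qed
  show ?case using Ebas md partI partII by (intro exI[of _ E] exI[of _ "N' + v"]) auto
qed

end

context pz begin

lemma lincomb_in:
  assumes sm: "submodule p d M" shows "set bs \<subseteq> M \<Longrightarrow> set cs \<subseteq> Zp p \<Longrightarrow> lincomb p cs bs \<in> M"
proof (induction cs arbitrary: bs)
  case Nil then show ?case using sm by (simp add: lincomb_def submodule_def)
next
  case (Cons c cs)
  note IH = Cons.IH and pr = Cons.prems
  show ?case
  proof (cases bs)
    case Nil then show ?thesis using sm by (simp add: lincomb_def submodule_def)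
  next
    case (Cons b bs')
    have e: "lincomb p (c # cs) bs = vadd p (vsmul p c b) (lincomb p cs bs')"
      by (simp add: lincomb_def Cons)
    have "lincomb p cs bs' \<in> M" using IH[of bs'] pr Cons by simp
    moreover have "vsmul p c b \<in> M" using sm pr Cons unfolding submodule_def by simp
    ultimately show ?thesis unfolding e using sm unfolding submodule_def by blast
  qed
qed

lemma lincomb_map: assumes "length bs = m" shows "lincomb p (map c [0..<m]) bs = lc p m c (nth bs)"
proof -
  have "lincomb p (map c [0..<m]) bs = lc p m (nth (map c [0..<m])) (nth bs)"
    by (rule lincomb_lc) (use assms in auto)
  also have "\<dots> = lc p m c (nth bs)" by (rule lc_eq_lt) auto
  finally show ?thesis .
qed

lemma basis_facts:
  assumes sm: "submodule p d M" and b: "is_basis p M bs"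
  shows "M = span p (length bs) (nth bs)"
    and "\<And>j. j < length bs \<Longrightarrow> bs ! j \<in> Zpvec p d"
    and "\<And>c c'. \<forall>j<length bs. c j \<in> Zp p \<Longrightarrow> \<forall>j<length bs. c' j \<in> Zp p \<Longrightarrow>
           lc p (length bs) c (nth bs) = lc p (length bs) c' (nth bs) \<Longrightarrow> \<forall>j<length bs. c j = c' j"
proof -
  let ?m = "length bs"
  have bsM: "set bs \<subseteq> M" using b unfolding is_basis_def by blast
  have MZ: "M \<subseteq> Zpvec p d" using sm unfolding submodule_def by blast
  have lcM: "lc p ?m c (nth bs) \<in> M" if "\<forall>j<?m. c j \<in> Zp p" for c
  proof -
    have "lincomb p (map c [0..<?m]) bs \<in> M" by (rule lincomb_in[OF sm bsM]) (use that in auto)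
    then show ?thesis by (simp add: lincomb_map)
  qed
  show "M = span p ?m (nth bs)"
  proof
    show "M \<subseteq> span p ?m (nth bs)"
    proof
      fix x assume "x \<in> M"
      then obtain cs where cs: "length cs = ?m" "set cs \<subseteq> Zp p" "x = lincomb p cs bs"
        using b unfolding is_basis_def by blast
      have "x = lc p ?m (nth cs) (nth bs)" using cs by (simp add: lincomb_lc)
      moreover have "\<forall>j<?m. cs ! j \<in> Zp p" using cs by auto
      ultimately show "x \<in> span p ?m (nth bs)" by (auto intro!: lc_in_span)
    qed
  next
    show "span p ?m (nth bs) \<subseteq> M" using lcM spanD by blast
  qed
  show "\<And>j. j < ?m \<Longrightarrow> bs ! j \<in> Zpvec p d" using bsM MZ nth_mem by blast
  fix c c' assume c: "\<forall>j<?m. c j \<in> Zp p" and c': "\<forall>j<?m. c' j \<in> Zp p"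
    and e: "lc p ?m c (nth bs) = lc p ?m c' (nth bs)"
  let ?x = "lc p ?m c (nth bs)"
  have "?x \<in> M" using lcM c by blast
  then have u: "\<exists>!cs. length cs = ?m \<and> set cs \<subseteq> Zp p \<and> ?x = lincomb p cs bs"
    using b unfolding is_basis_def by blast
  have 1: "length (map c [0..<?m]) = ?m \<and> set (map c [0..<?m]) \<subseteq> Zp p \<and> ?x = lincomb p (map c [0..<?m]) bs"
    using c by (auto simp: lincomb_map)
  have 2: "length (map c' [0..<?m]) = ?m \<and> set (map c' [0..<?m]) \<subseteq> Zp p \<and> ?x = lincomb p (map c' [0..<?m]) bs"
    using c' e by (auto simp: lincomb_map)
  have "map c [0..<?m] = map c' [0..<?m]" using u 1 2 by blast
  then show "\<forall>j<?m. c j = c' j" by (simp add: map_eq_conv)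
qed

end


definition cls :: "int \<Rightarrow> zvec set \<Rightarrow> zvec \<Rightarrow> zvec set" where
  "cls q M x = {y \<in> M. \<exists>z\<in>M. y = vadd q x (vsmul q (pk q 1) z)}"

context pz begin

lemma relchar:
  assumes sm: "submodule p d M" and b: "is_basis p M bs" and m: "m = length bs"
    and c: "\<forall>j<m. c j \<in> Zp p" and c': "\<forall>j<m. c' j \<in> Zp p"
  shows "lc p m c' (nth bs) \<in> cls p M (lc p m c (nth bs)) \<longleftrightarrow> (\<forall>j<m. c' j 1 = c j 1)"
proof -
  let ?B = "nth bs"
  have M: "M = span p m ?B" unfolding m by (rule basis_facts(1)[OF sm b])
  have U: "\<And>c c'. \<forall>j<m. c j \<in> Zp p \<Longrightarrow> \<forall>j<m. c' j \<in> Zp p \<Longrightarrow>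
           lc p m c ?B = lc p m c' ?B \<Longrightarrow> \<forall>j<m. c j = c' j"
    unfolding m by (rule basis_facts(3)[OF sm b])
  show ?thesis
  proof
    assume "lc p m c' ?B \<in> cls p M (lc p m c ?B)"
    then obtain z where z: "z \<in> M" "lc p m c' ?B = vadd p (lc p m c ?B) (vsmul p (pk p 1) z)"
      unfolding cls_def by blast
    have "z \<in> span p m ?B" using z(1) M by simp
    then obtain e where e: "\<forall>j<m. e j \<in> Zp p" "z = lc p m e ?B" using spanD by blast
    have lceq: "lc p m c' ?B = lc p m (\<lambda>j. zadd p (c j) (zmul p (pk p 1) (e j))) ?B"
      using z(2) e(2) by (simp add: lc_smul lc_add)
    have eq: "\<forall>j<m. c' j = zadd p (c j) (zmul p (pk p 1) (e j))"
      by (rule U[OF _ _ lceq]) (use c c' e in auto)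
    show "\<forall>j<m. c' j 1 = c j 1"
    proof (intro allI impI)
      fix j assume j: "j < m"
      have "c' j 1 = (c j 1 + ((p mod p) * e j 1) mod p) mod p"
        using eq j by (simp add: zadd_def zmul_def pk_def zof_int_def)
      also have "\<dots> = c j 1 mod p" by simp
      also have "\<dots> = c j 1" using Zp_mod[of "c j" 1] c j by simp
      finally show "c' j 1 = c j 1" .
    qed
  next
    assume r: "\<forall>j<m. c' j 1 = c j 1"
    define \<delta> where "\<delta> j = zadd p (c' j) (zneg p (c j))" for j
    have dZ: "\<delta> j \<in> Zp p" if "j < m" for j using c c' that by (simp add: \<delta>_def)
    have d1: "\<delta> j 1 = 0" if "j < m" for j
      using r that by (simp add: \<delta>_def zadd_def zneg_def modsimps)
    define e where "e j = (SOME y. y \<in> Zp p \<and> (\<forall>n. [\<delta> j n = p ^ 1 * y n] (mod p ^ n)))" for j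
    have eP: "e j \<in> Zp p \<and> (\<forall>n. [\<delta> j n = p ^ 1 * e j n] (mod p ^ n))" if "j < m" for j
    proof -
      have "\<exists>y. y \<in> Zp p \<and> (\<forall>n. [\<delta> j n = p ^ 1 * y n] (mod p ^ n))"
        using zdiv_ex[OF dZ[OF that] d1[OF that]] by blast
      then show ?thesis unfolding e_def by (rule someI_ex)
    qed
    have zM: "lc p m e ?B \<in> M" unfolding M using eP by (auto intro!: lc_in_span)
    have "vadd p (lc p m c ?B) (vsmul p (pk p 1) (lc p m e ?B))
          = lc p m (\<lambda>j. zadd p (c j) (zmul p (pk p 1) (e j))) ?B"
      by (simp add: lc_smul lc_add)
    also have "\<dots> = lc p m c' ?B"
    proof (rule lc_cong_coef)
      fix j n assume j: "j < m"
      have h1: "[\<delta> j n = p * e j n] (mod p ^ n)" using eP[OF j] by simp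
      have h2: "[\<delta> j n = c' j n - c j n] (mod p ^ n)"
        by (simp add: \<delta>_def zadd_def zneg_def cong_def modsimps)
      have "[p * e j n = c' j n - c j n] (mod p ^ n)" using cong_trans[OF cong_sym[OF h1] h2] .
      then have "[c j n + p * e j n = c j n + (c' j n - c j n)] (mod p ^ n)"
        by (rule cong_add[OF cong_refl])
      then show "[zadd p (c j) (zmul p (pk p 1) (e j)) n = c' j n] (mod p ^ n)"
        by (simp add: zadd_def zmul_def pk_def zof_int_def cong_def modsimps)
    qed
    finally have "lc p m c' ?B = vadd p (lc p m c ?B) (vsmul p (pk p 1) (lc p m e ?B))" by simp
    moreover have "lc p m c' ?B \<in> M" unfolding M using c' by (auto intro!: lc_in_span)
    ultimately show "lc p m c' ?B \<in> cls p M (lc p m c ?B)" unfolding cls_def using zM by blast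
  qed
qed


lemma cls_eq:
  assumes sm: "submodule p d M" and b: "is_basis p M bs" and m: "m = length bs"
    and c: "\<forall>j<m. c j \<in> Zp p" and c'': "\<forall>j<m. c'' j \<in> Zp p" and res: "\<forall>j<m. c j 1 = c'' j 1"
  shows "cls p M (lc p m c (nth bs)) = cls p M (lc p m c'' (nth bs))"
proof (rule set_eqI)
  fix y
  have M: "M = span p m (nth bs)" unfolding m by (rule basis_facts(1)[OF sm b])
  show "y \<in> cls p M (lc p m c (nth bs)) \<longleftrightarrow> y \<in> cls p M (lc p m c'' (nth bs))"
  proof (cases "y \<in> M")
    case False then show ?thesis unfolding cls_def by blast
  next
    case True
    then have "y \<in> span p m (nth bs)" using M by simp
    then obtain c' where c': "\<forall>j<m. c' j \<in> Zp p" "y = lc p m c' (nth bs)" using spanD by blast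
    show ?thesis unfolding c'(2) using relchar[OF sm b m c c'(1)] relchar[OF sm b m c'' c'(1)] res
      by auto
  qed
qed

lemma card_cls:
  assumes sm: "submodule p d M" and b: "is_basis p M bs"
  shows "card (cls p M ` M) = nat p ^ length bs"
proof -
  define m where "m = length bs"
  have M: "M = span p m (nth bs)" unfolding m_def by (rule basis_facts(1)[OF sm b])
  define R where "R = PiE {..<m} (\<lambda>_. {0..<p})"
  define \<phi> where "\<phi> r = cls p M (lc p m (\<lambda>j. zof_int p (r j)) (nth bs))" for r
  have zofZ: "\<forall>j<m. zof_int p (r j) \<in> Zp p" for r by simp
  have img: "cls p M ` M = \<phi> ` R"
  proof
    show "cls p M ` M \<subseteq> \<phi> ` R"
    proof
      fix X assume "X \<in> cls p M ` M"
      then obtain x where x: "x \<in> M" "X = cls p M x" by blast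
      have "x \<in> span p m (nth bs)" using x(1) M by simp
      then obtain c where c: "\<forall>j<m. c j \<in> Zp p" "x = lc p m c (nth bs)" using spanD by blast
      define r where "r = restrict (\<lambda>j. c j 1) {..<m}"
      have cr: "c j 1 \<in> {0..<p}" if "j < m" for j
      proof -
        have "c j \<in> Zp p" using c(1) that by blast
        then show ?thesis using ZpD(1,2)[of "c j" 1] by simp
      qed
      have rR: "r \<in> R" unfolding R_def r_def using cr by (simp add: restrict_PiE_iff)
      have "\<forall>j<m. c j 1 = zof_int p (r j) 1"
      proof (intro allI impI)
        fix j assume j: "j < m"
        have "c j 1 mod p = c j 1" using cr[OF j] by simp
        then show "c j 1 = zof_int p (r j) 1" using j by (simp add: r_def zof_int_def)
      qed
      then have "X = \<phi> r" unfolding x(2) c(2) \<phi>_def by (rule cls_eq[OF sm b m_def c(1) zofZ])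
      then show "X \<in> \<phi> ` R" using rR by blast
    qed
  next
    show "\<phi> ` R \<subseteq> cls p M ` M"
    proof
      fix X assume "X \<in> \<phi> ` R"
      then obtain r where "X = \<phi> r" by blast
      moreover have "lc p m (\<lambda>j. zof_int p (r j)) (nth bs) \<in> M" unfolding M by (rule lc_in_span) simp
      ultimately show "X \<in> cls p M ` M" unfolding \<phi>_def by blast
    qed
  qed
  have inj: "inj_on \<phi> R"
  proof (rule inj_onI)
    fix r r' assume r: "r \<in> R" and r': "r' \<in> R" and e: "\<phi> r = \<phi> r'"
    let ?x = "lc p m (\<lambda>j. zof_int p (r j)) (nth bs)"
    have "?x \<in> \<phi> r" unfolding \<phi>_def by (rule relchar[OF sm b m_def zofZ[of r] zofZ[of r], THEN iffD2]) simp
    then have "?x \<in> \<phi> r'" using e by simp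
    then have res: "\<forall>j<m. zof_int p (r j) 1 = zof_int p (r' j) 1"
      unfolding \<phi>_def by (rule relchar[OF sm b m_def zofZ[of r'] zofZ[of r], THEN iffD1])
    show "r = r'"
    proof (rule PiE_ext[OF r[unfolded R_def] r'[unfolded R_def]])
      fix j assume "j \<in> {..<m}"
      then have j: "j < m" by simp
      have "r j \<in> {0..<p}" using r \<open>j \<in> {..<m}\<close> unfolding R_def by (rule PiE_mem)
      moreover have "r' j \<in> {0..<p}" using r' \<open>j \<in> {..<m}\<close> unfolding R_def by (rule PiE_mem)
      moreover have "zof_int p (r j) 1 = zof_int p (r' j) 1" using res j by blast
      then have "r j mod p = r' j mod p" unfolding zof_int_def by simp
      ultimately show "r j = r' j" by (metis atLeastLessThan_iff mod_pos_pos_trivial)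
    qed
  qed
  have "card (cls p M ` M) = card R" using img inj card_image by simp
  also have "card R = nat p ^ m" unfolding R_def by (simp add: card_PiE)
  finally show ?thesis unfolding m_def .
qed

lemma basis_len_unique:
  assumes sm: "submodule p d M" and b1: "is_basis p M bs1" and b2: "is_basis p M bs2"
  shows "length bs1 = length bs2"
proof -
  have "nat p ^ length bs1 = nat p ^ length bs2" using card_cls[OF sm b1] card_cls[OF sm b2] by simp
  moreover have "nat p > 1" using p_gt1 by simp
  ultimately show ?thesis by (simp add: power_inject_exp)
qed

lemma lattice_dim_eq:
  assumes sm: "submodule p d M" and b: "is_basis p M bs"
  shows "lattice_dim p M = length bs"
  unfolding lattice_dim_def
proof (rule Least_equality)
  show "\<exists>bsa. length bsa = length bs \<and> is_basis p M bsa" using b by blast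
next
  fix n assume "\<exists>bsa. length bsa = n \<and> is_basis p M bsa"
  then obtain bs' where "length bs' = n" "is_basis p M bs'" by blast
  then show "length bs \<le> n" using basis_len_unique[OF sm b] by simp
qed

end

context pz begin

lemma iter_in:
  assumes C: "\<forall>x\<in>I. \<forall>s\<in>S'. br x s \<in> I"
  shows "x \<in> I \<Longrightarrow> set ss \<subseteq> S' \<Longrightarrow> iter_br br x ss \<in> I"
proof (induction ss arbitrary: x)
  case Nil then show ?case by (simp add: iter_br_def)
next
  case (Cons s ss)
  have "br x s \<in> I" using C Cons.prems by simp
  then have "iter_br br (br x s) ss \<in> I" using Cons.IH Cons.prems by simp
  then show ?case by (simp add: iter_br_def)
qed

lemma submodule_Int: "submodule p d A \<Longrightarrow> submodule p d B \<Longrightarrow> submodule p d (A \<inter> B)"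
  unfolding submodule_def by blast

lemma filt_restrict:
  assumes PF: "potent_filtration p d br (Zpvec p d) (Zpvec p d) Ms"
    and smI: "submodule p d I" and IS: "I \<subseteq> S'" and SZ: "S' \<subseteq> Zpvec p d"
    and C: "\<forall>x\<in>I. \<forall>s\<in>S'. br x s \<in> I"
    and sat: "\<forall>y\<in>Zpvec p d. vsmul p (zof_int p p) y \<in> I \<longrightarrow> y \<in> I"
  shows "potent_filtration p d br S' I (\<lambda>i. I \<inter> Ms i)"
proof -
  have M1: "Ms 1 = Zpvec p d"
    and Mid: "\<And>i. i \<ge> 1 \<Longrightarrow> lie_ideal p d br (Zpvec p d) (Ms i)"
    and Mdec: "\<And>i. i \<ge> 1 \<Longrightarrow> Ms (Suc i) \<subseteq> Ms i"
    and Mint: "(\<Inter>i\<in>{1..}. Ms i) = {vzero}"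
    and Mbr: "\<And>i x s. i \<ge> 1 \<Longrightarrow> x \<in> Ms i \<Longrightarrow> s \<in> Zpvec p d \<Longrightarrow> br x s \<in> Ms (Suc i)"
    and Mit: "\<And>i x ss. i \<ge> 1 \<Longrightarrow> x \<in> Ms i \<Longrightarrow> length ss = nat (p - 1) \<Longrightarrow> set ss \<subseteq> Zpvec p d \<Longrightarrow>
        iter_br br x ss \<in> vsmul p (zof_int p p) ` Ms (Suc i)"
    using PF unfolding potent_filtration_def by blast+
  have IZ: "I \<subseteq> Zpvec p d" using smI unfolding submodule_def by blast
  have z0: "vzero \<in> I" using smI unfolding submodule_def by blast
  have zM: "vzero \<in> Ms i" if "i \<ge> 1" for i using Mint that by auto
  show ?thesis unfolding potent_filtration_def
  proof (intro conjI allI impI ballI)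
    show "I \<inter> Ms 1 = I" using M1 IZ by auto
  next
    fix i :: nat assume i: "i \<ge> 1"
    have smM: "submodule p d (Ms i)" "Ms i \<subseteq> Zpvec p d"
      and brM: "\<forall>x\<in>Ms i. \<forall>s\<in>Zpvec p d. br x s \<in> Ms i"
      using Mid[OF i] unfolding lie_ideal_def by blast+
    show "lie_ideal p d br S' (I \<inter> Ms i)" unfolding lie_ideal_def
    proof (intro conjI ballI)
      show "submodule p d (I \<inter> Ms i)" by (rule submodule_Int[OF smI smM(1)])
      show "I \<inter> Ms i \<subseteq> S'" using IS by blast
    next
      fix x s assume x: "x \<in> I \<inter> Ms i" and s: "s \<in> S'"
      show "br x s \<in> I \<inter> Ms i" using C brM x s SZ by blast
    qed
  next
    fix i :: nat assume i: "i \<ge> 1"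
    show "I \<inter> Ms (Suc i) \<subseteq> I \<inter> Ms i" using Mdec[OF i] by blast
  next
    show "(\<Inter>i\<in>{1..}. I \<inter> Ms i) = {vzero}"
    proof
      show "(\<Inter>i\<in>{1..}. I \<inter> Ms i) \<subseteq> {vzero}" using Mint by blast
      show "{vzero} \<subseteq> (\<Inter>i\<in>{1..}. I \<inter> Ms i)" using z0 zM by auto
    qed
  next
    fix i :: nat and x s assume i: "i \<ge> 1" and x: "x \<in> I \<inter> Ms i" and s: "s \<in> S'"
    show "br x s \<in> I \<inter> Ms (Suc i)" using C Mbr[OF i] x s SZ by blast
  next
    fix i :: nat and x ss assume i: "i \<ge> 1" and x: "x \<in> I \<inter> Ms i"
      and len: "length ss = nat (p - 1)" and ss: "set ss \<subseteq> S'"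
    obtain y where y: "y \<in> Ms (Suc i)" "iter_br br x ss = vsmul p (zof_int p p) y"
      using Mit[OF i _ len] x ss SZ by blast
    have "Ms (Suc i) \<subseteq> Zpvec p d" using Mid[of "Suc i"] unfolding lie_ideal_def submodule_def by simp
    then have yZ: "y \<in> Zpvec p d" using y(1) by blast
    have "iter_br br x ss \<in> I" using iter_in[OF C] x ss by blast
    then have "y \<in> I" using sat yZ y(2) by simp
    then show "iter_br br x ss \<in> vsmul p (zof_int p p) ` (I \<inter> Ms (Suc i))" using y by blast
  qed
qed

lemma vsmul_Zpvec: assumes "c \<in> Zp p" "x \<in> Zpvec p d" shows "vsmul p c x \<in> Zpvec p d"
  unfolding Zpvec_def
proof (intro CollectI conjI allI impI)
  fix i assume "i < d" then show "vsmul p c x i \<in> Zp p"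
    unfolding vsmul_def using assms Zpvec_D by simp
next
  fix i assume "d \<le> i" then show "vsmul p c x i = (\<lambda>n. 0)"
    unfolding vsmul_def using Zpvec_D2[OF assms(2)] by (simp add: zmul_def)
qed

lemma span_submodule: "(\<And>j. j < m \<Longrightarrow> E j \<in> Zpvec p d) \<Longrightarrow> submodule p d (span p m E)"
  unfolding submodule_def using span_Zpvec span_vzero span_add span_smul by blast

lemma uniq_span:
  assumes E: "ebasis p d E" and md: "m \<le> d" and c: "\<forall>j<m. c j \<in> Zp p" and c': "\<forall>j<m. c' j \<in> Zp p"
    and e: "lc p m c E = lc p m c' E"
  shows "\<forall>j<m. c j = c' j"
proof (intro allI impI)
  fix j assume j: "j < m"
  define c0 where "c0 j = (if j < m then c j else zero_zp)" for j
  define c0' where "c0' j = (if j < m then c' j else zero_zp)" for j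
  have "lc p d c0 E = lc p m c0 E" by (rule lc_extend[OF md]) (auto simp: c0_def)
  also have "\<dots> = lc p m c E" by (rule lc_eq_lt) (auto simp: c0_def)
  also have "\<dots> = lc p m c' E" by (rule e)
  also have "\<dots> = lc p m c0' E" by (rule lc_eq_lt) (auto simp: c0'_def)
  also have "\<dots> = lc p d c0' E" by (rule lc_extend[OF md, symmetric]) (auto simp: c0'_def)
  finally have "lc p d c0 E = lc p d c0' E" .
  then have "c0 j = c0' j" using ebasisD(3)[OF E, of c0 c0' j] c c' j md by (auto simp: c0_def c0'_def)
  then show "c j = c' j" using j by (simp add: c0_def c0'_def)
qed

lemma span_basis:
  assumes E: "ebasis p d E" and md: "m \<le> d"
  shows "is_basis p (span p m E) (map E [0..<m])"
  unfolding is_basis_def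
proof (intro conjI ballI)
  show "set (map E [0..<m]) \<subseteq> span p m E"
  proof
    fix y assume "y \<in> set (map E [0..<m])"
    then obtain j where j: "j < m" "y = E j" by auto
    have "E j \<in> Zpvec p d" using ebasisD(1)[OF E] j md by simp
    then show "y \<in> span p m E" using span_gen[of j m E d] j by simp
  qed
next
  fix x assume "x \<in> span p m E"
  then obtain c where c: "\<forall>j<m. c j \<in> Zp p" "x = lc p m c E" using spanD by blast
  have lm: "lincomb p cs (map E [0..<m]) = lc p m (nth cs) E" if "length cs = m" for cs
  proof -
    have "lincomb p cs (map E [0..<m]) = lc p m (nth cs) (nth (map E [0..<m]))"
      by (rule lincomb_lc) (use that in auto)
    also have "\<dots> = lc p m (nth cs) E" by (rule lc_eq_lt) auto
    finally show ?thesis .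
  qed
  show "\<exists>!cs. length cs = length (map E [0..<m]) \<and> set cs \<subseteq> Zp p \<and> x = lincomb p cs (map E [0..<m])"
  proof (rule ex1I[of _ "map c [0..<m]"])
    have "lc p m (nth (map c [0..<m])) E = lc p m c E" by (rule lc_eq_lt) auto
    then show "length (map c [0..<m]) = length (map E [0..<m]) \<and> set (map c [0..<m]) \<subseteq> Zp p \<and>
        x = lincomb p (map c [0..<m]) (map E [0..<m])"
      using c lm[of "map c [0..<m]"] by auto
  next
    fix cs assume cs: "length cs = length (map E [0..<m]) \<and> set cs \<subseteq> Zp p \<and> x = lincomb p cs (map E [0..<m])"
    have l: "length cs = m" using cs by simp
    have "lc p m (nth cs) E = lc p m c E" using cs lm[OF l] c(2) by simp
    moreover have "\<forall>j<m. cs ! j \<in> Zp p" using cs l nth_mem by blast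
    ultimately have "\<forall>j<m. cs ! j = c j" using uniq_span[OF E md] c(1) by blast
    then show "cs = map c [0..<m]" using l by (auto intro: nth_equalityI)
  qed
qed

end

context pz begin

lemma vadd_assoc: "vadd p (vadd p a b) c = vadd p a (vadd p b c)"
  by (simp add: vadd_def zadd_def fun_eq_iff modsimps add.assoc)

lemma vadd_neg_cancel: assumes "nv p l" shows "vadd p w (vadd p (vsmul p (mone p) w) l) = l"
proof (rule vec_eqI)
  fix i n
  have "[w i n + ((- 1) * w i n + l i n) = l i n] (mod p ^ n)" by simp
  then show "[vadd p w (vadd p (vsmul p (mone p) w) l) i n = l i n] (mod p ^ n)"
    by (simp add: vadd_def vsmul_def zadd_def zmul_def mone_def zneg_def zof_int_def cong_def modsimps)
qed (use assms in simp_all)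

lemma vadd_diff: assumes "nv p x'" shows "x' = vadd p x (vadd p x' (vsmul p (mone p) x))"
proof (rule vec_eqI)
  fix i n
  have "[x' i n = x i n + (x' i n + (- 1) * x i n)] (mod p ^ n)" by simp
  then show "[x' i n = vadd p x (vadd p x' (vsmul p (mone p) x)) i n] (mod p ^ n)"
    by (simp add: vadd_def vsmul_def zadd_def zmul_def mone_def zneg_def zof_int_def cong_def modsimps)
qed (use assms in simp_all)

lemma cosets_finite:
  assumes E: "ebasis p d E" and md: "m \<le> d"
    and II: "\<forall>x\<in>span p m E. vsmul p (pk p N) x \<in> L"
    and smL: "submodule p d L"
  shows "finite (cosets p (span p m E) L)"
proof -
  let ?I = "span p m E"
  have IZ: "?I \<subseteq> Zpvec p d" by (rule span_Zpvec) (use ebasisD(1)[OF E] md in auto)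
  have LZ: "L \<subseteq> Zpvec p d" using smL unfolding submodule_def by blast
  have key: "vadd p x ` L = vadd p x' ` L"
    if x: "x \<in> ?I" and x': "x' \<in> ?I" and g: "\<forall>i<d. x i N = x' i N" for x x'
  proof -
    define w where "w = vadd p x' (vsmul p (mone p) x)"
    have wI: "w \<in> ?I" unfolding w_def by (intro span_add span_smul x x' mone_Zp)
    have wZ: "w \<in> Zpvec p d" using wI IZ by blast
    have w0: "w i N = 0" if "i < d" for i
    proof -
      have "x' i N = x i N" using g that by simp
      then show ?thesis
        by (simp add: w_def vadd_def vsmul_def zadd_def zmul_def mone_def zneg_def zof_int_def modsimps)
    qed
    define z where "z i = (if i < d then (SOME y. y \<in> Zp p \<and> (\<forall>n. [w i n = p ^ N * y n] (mod p ^ n)))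
        else (\<lambda>n. 0))" for i
    have zP: "z i \<in> Zp p \<and> (\<forall>n. [w i n = p ^ N * z i n] (mod p ^ n))" if "i < d" for i
    proof -
      have "\<exists>y. y \<in> Zp p \<and> (\<forall>n. [w i n = p ^ N * y n] (mod p ^ n))"
        using zdiv_ex[OF Zpvec_D[OF wZ that] w0[OF that]] by blast
      then have "(SOME y. y \<in> Zp p \<and> (\<forall>n. [w i n = p ^ N * y n] (mod p ^ n))) \<in> Zp p \<and>
          (\<forall>n. [w i n = p ^ N * (SOME y. y \<in> Zp p \<and> (\<forall>n. [w i n = p ^ N * y n] (mod p ^ n))) n] (mod p ^ n))"
        by (rule someI_ex)
      then show ?thesis unfolding z_def using that by simp
    qed
    have zZ: "z \<in> Zpvec p d" unfolding Zpvec_def using zP by (auto simp: z_def)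
    have pz: "vsmul p (pk p N) z = w"
    proof (rule vec_eqI)
      fix i n show "[vsmul p (pk p N) z i n = w i n] (mod p ^ n)"
      proof (cases "i < d")
        case True then have "[w i n = p ^ N * z i n] (mod p ^ n)" using zP by blast
        then show ?thesis by (simp add: vsmul_def zmul_def pk_def zof_int_def cong_def modsimps)
      next
        case False then show ?thesis using Zpvec_D2[OF wZ, of i] by (simp add: z_def vsmul_def zmul_def)
      qed
    qed (use wZ Zpvec_nv in auto)
    have "z \<in> ?I" by (rule sat_lemma[OF E md zZ, of N]) (use pz wI in simp)
    then have wL: "w \<in> L" using II pz by force
    have mwL: "vsmul p (mone p) w \<in> L" using smL wL unfolding submodule_def by simp
    have x'e: "x' = vadd p x w" unfolding w_def by (rule vadd_diff) (use x' IZ Zpvec_nv in blast)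
    show ?thesis
    proof
      show "vadd p x ` L \<subseteq> vadd p x' ` L"
      proof
        fix y assume "y \<in> vadd p x ` L"
        then obtain l where l: "l \<in> L" "y = vadd p x l" by blast
        have nl: "nv p l" using l(1) LZ Zpvec_nv by blast
        have "vadd p x' (vadd p (vsmul p (mone p) w) l) = vadd p x (vadd p w (vadd p (vsmul p (mone p) w) l))"
          unfolding x'e by (rule vadd_assoc)
        also have "\<dots> = y" using vadd_neg_cancel[OF nl] l(2) by simp
        finally have "y = vadd p x' (vadd p (vsmul p (mone p) w) l)" by simp
        moreover have "vadd p (vsmul p (mone p) w) l \<in> L" using smL mwL l(1) unfolding submodule_def by blast
        ultimately show "y \<in> vadd p x' ` L" by blast
      qed
    next
      show "vadd p x' ` L \<subseteq> vadd p x ` L"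
      proof
        fix y assume "y \<in> vadd p x' ` L"
        then obtain l where l: "l \<in> L" "y = vadd p x' l" by blast
        have "y = vadd p x (vadd p w l)" using l(2) unfolding x'e by (simp add: vadd_assoc)
        moreover have "vadd p w l \<in> L" using smL wL l(1) unfolding submodule_def by blast
        ultimately show "y \<in> vadd p x ` L" by blast
      qed
    qed
  qed
  define g where "g x = (\<lambda>i. if i < d then x i N else (0::int))" for x :: zvec
  define G where "G = (\<lambda>h. \<lambda>i. if i < d then h i else (0::int)) ` (PiE {..<d} (\<lambda>_. {0..<p ^ N}))"
  have Gfin: "finite G" unfolding G_def by (intro finite_imageI finite_PiE) auto
  have gG: "g ` ?I \<subseteq> G"
  proof
    fix r assume "r \<in> g ` ?I"
    then obtain x where x: "x \<in> ?I" "r = g x" by blast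
    have xZ: "x \<in> Zpvec p d" using x(1) IZ by blast
    let ?h = "restrict (\<lambda>i. x i N) {..<d}"
    have "x i N \<in> {0..<p ^ N}" if "i < d" for i
      using ZpD(1,2)[OF Zpvec_D[OF xZ that], of N] by simp
    then have hP: "?h \<in> PiE {..<d} (\<lambda>_. {0..<p ^ N})" by (simp add: restrict_PiE_iff)
    have "r = (\<lambda>i. if i < d then ?h i else 0)" using x(2) by (auto simp: g_def fun_eq_iff)
    then show "r \<in> G" unfolding G_def using hP by blast
  qed
  have gfin: "finite (g ` ?I)" using Gfin gG finite_subset by blast
  define F where "F r = vadd p (SOME x. x \<in> ?I \<and> g x = r) ` L" for r
  have "cosets p ?I L \<subseteq> F ` (g ` ?I)"
  proof
    fix C assume "C \<in> cosets p ?I L"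
    then obtain x where x: "x \<in> ?I" "C = vadd p x ` L" unfolding cosets_def by blast
    let ?x = "SOME x'. x' \<in> ?I \<and> g x' = g x"
    have sx: "?x \<in> ?I \<and> g ?x = g x"
      by (rule someI[where P = "\<lambda>x'. x' \<in> ?I \<and> g x' = g x"]) (use x in auto)
    have "\<forall>i<d. ?x i N = x i N"
    proof (intro allI impI)
      fix i assume "i < d"
      then show "?x i N = x i N" using fun_cong[OF conjunct2[OF sx], of i] by (simp add: g_def)
    qed
    then have "vadd p ?x ` L = vadd p x ` L" using key sx x(1) by blast
    then have "C = F (g x)" using x(2) unfolding F_def by simp
    then show "C \<in> F ` (g ` ?I)" using x(1) by blast
  qed
  then show ?thesis using gfin finite_subset by blast
qed

end

context pz begin

lemma zof_pk: "zof_int p (p ^ k) = pk p k" by (simp add: pk_def)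

lemma final:
  assumes lat: "lie_lattice p d br" and sat: "saturable p d br (Zpvec p d)"
    and Ls: "lie_sublattice p d br L"
  shows "saturable p d br (isolator p (Zpvec p d) L)
    \<and> finite (cosets p (isolator p (Zpvec p d) L) L)
    \<and> lattice_dim p L = lattice_dim p (isolator p (Zpvec p d) L)
    \<and> (lie_ideal p d br (Zpvec p d) L \<longrightarrow> PF_embedded p d br (Zpvec p d) (isolator p (Zpvec p d) L))"
proof -
  define I where "I = isolator p (Zpvec p d) L"
  have Idef: "I = {x \<in> Zpvec p d. \<exists>k. vsmul p (pk p k) x \<in> L}"
    unfolding I_def isolator_def zof_pk ..
  have smL: "submodule p d L" and brL: "\<forall>x\<in>L. \<forall>y\<in>L. br x y \<in> L"
    using Ls unfolding lie_sublattice_def by blast+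
  obtain bs where b: "is_basis p L bs" using Ls unfolding lie_sublattice_def by blast
  define m where "m = length bs"
  have LZ: "L \<subseteq> Zpvec p d" using smL unfolding submodule_def by blast
  have Bv: "\<forall>j<m. bs ! j \<in> Zpvec p d" using basis_facts(2)[OF smL b] unfolding m_def by blast
  have Lspan: "L = span p m (nth bs)" unfolding m_def by (rule basis_facts(1)[OF smL b])
  have ind: "indep p m (nth bs)"
    unfolding indep_def
  proof (intro allI impI)
    fix c j assume c: "\<forall>j<m. c j \<in> Zp p" and e: "lc p m c (nth bs) = vzero" and j: "j < m"
    have "lc p m c (nth bs) = lc p m (\<lambda>_. zero_zp) (nth bs)" using e lc_zero by simp
    then have "\<forall>j<m. c j = zero_zp"
      using basis_facts(3)[OF smL b, of c "\<lambda>_. zero_zp"] c unfolding m_def by simp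
    then show "c j = zero_zp" using j by blast
  qed
  obtain E N where EN: "ebasis p d E" "m \<le> d"
     "\<forall>x\<in>Zpvec p d. (\<exists>k. vsmul p (pk p k) x \<in> span p m (nth bs)) \<longrightarrow> x \<in> span p m E"
     "\<forall>x\<in>span p m E. vsmul p (pk p N) x \<in> span p m (nth bs)"
    using main_ind[OF Bv ind] by blast
  have Ev: "\<And>j. j < m \<Longrightarrow> E j \<in> Zpvec p d" using ebasisD(1)[OF EN(1)] EN(2) by simp
  have EZ: "span p m E \<subseteq> Zpvec p d" by (rule span_Zpvec) (use Ev in auto)
  have Ispan: "I = span p m E"
  proof
    show "I \<subseteq> span p m E" using EN(3) unfolding Idef Lspan[symmetric] by blast
    show "span p m E \<subseteq> I" using EN(4) EZ unfolding Idef Lspan[symmetric] by blast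
  qed
  have smI: "submodule p d I" unfolding Ispan by (rule span_submodule) (use Ev in auto)
  have IZ: "I \<subseteq> Zpvec p d" using EZ Ispan by simp
  have satI: "\<forall>y\<in>Zpvec p d. vsmul p (zof_int p p) y \<in> I \<longrightarrow> y \<in> I"
  proof (intro ballI impI)
    fix y assume y: "y \<in> Zpvec p d" and h: "vsmul p (zof_int p p) y \<in> I"
    then obtain k where "vsmul p (pk p k) (vsmul p (pk p 1) y) \<in> L"
      unfolding Idef by (auto simp: pk_def)
    then have "vsmul p (pk p (k + 1)) y \<in> L" by (simp add: vsmul_pk_pk)
    then show "y \<in> I" unfolding Idef using y by blast
  qed
  have brZ: "\<forall>x\<in>Zpvec p d. \<forall>y\<in>Zpvec p d. br x y \<in> Zpvec p d"
    and smulL: "\<forall>c\<in>Zp p. \<forall>x\<in>Zpvec p d. \<forall>y\<in>Zpvec p d.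
        br (vsmul p c x) y = vsmul p c (br x y) \<and> br x (vsmul p c y) = vsmul p c (br x y)"
    using lat unfolding lie_lattice_def by blast+
  have brI: "\<forall>x\<in>I. \<forall>y\<in>I. br x y \<in> I"
  proof (intro ballI)
    fix x y assume x: "x \<in> I" and y: "y \<in> I"
    obtain a where a: "x \<in> Zpvec p d" "vsmul p (pk p a) x \<in> L" using x unfolding Idef by blast
    obtain b where b: "y \<in> Zpvec p d" "vsmul p (pk p b) y \<in> L" using y unfolding Idef by blast
    have ybZ: "vsmul p (pk p b) y \<in> Zpvec p d" using vsmul_Zpvec b(1) by simp
    have "br (vsmul p (pk p a) x) (vsmul p (pk p b) y) = vsmul p (pk p a) (br x (vsmul p (pk p b) y))"
      using smulL a(1) ybZ by simp
    also have "br x (vsmul p (pk p b) y) = vsmul p (pk p b) (br x y)" using smulL a(1) b(1) by simp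
    also have "vsmul p (pk p a) (vsmul p (pk p b) (br x y)) = vsmul p (pk p (a + b)) (br x y)"
      by (rule vsmul_pk_pk)
    finally have "vsmul p (pk p (a + b)) (br x y) \<in> L" using brL a(2) b(2) by metis
    moreover have "br x y \<in> Zpvec p d" using brZ a(1) b(1) by blast
    ultimately show "br x y \<in> I" unfolding Idef by blast
  qed
  obtain Ms where PF: "potent_filtration p d br (Zpvec p d) (Zpvec p d) Ms"
    using sat unfolding saturable_def PF_embedded_def by blast
  have basI: "is_basis p I (map E [0..<m])" unfolding Ispan by (rule span_basis[OF EN(1,2)])
  have satur: "saturable p d br I"
    unfolding saturable_def lie_sublattice_def PF_embedded_def
    using smI brI basI filt_restrict[OF PF smI subset_refl IZ brI satI] by blast
  have fin: "finite (cosets p I L)"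
    unfolding Ispan by (rule cosets_finite[OF EN(1,2) _ smL]) (use EN(4) Lspan in simp)
  have dims: "lattice_dim p L = lattice_dim p I"
    using lattice_dim_eq[OF smL b] lattice_dim_eq[OF smI basI] m_def by simp
  have ideal: "lie_ideal p d br (Zpvec p d) L \<longrightarrow> PF_embedded p d br (Zpvec p d) I"
  proof
    assume "lie_ideal p d br (Zpvec p d) L"
    then have id: "\<forall>x\<in>L. \<forall>s\<in>Zpvec p d. br x s \<in> L" unfolding lie_ideal_def by blast
    have C: "\<forall>x\<in>I. \<forall>s\<in>Zpvec p d. br x s \<in> I"
    proof (intro ballI)
      fix x s assume x: "x \<in> I" and s: "s \<in> Zpvec p d"
      obtain k where k: "x \<in> Zpvec p d" "vsmul p (pk p k) x \<in> L" using x unfolding Idef by blast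
      have "br (vsmul p (pk p k) x) s = vsmul p (pk p k) (br x s)" using smulL k(1) s by simp
      then have "vsmul p (pk p k) (br x s) \<in> L" using id k(2) s by metis
      moreover have "br x s \<in> Zpvec p d" using brZ k(1) s by blast
      ultimately show "br x s \<in> I" unfolding Idef by blast
    qed
    show "PF_embedded p d br (Zpvec p d) I"
      unfolding PF_embedded_def using filt_restrict[OF PF smI IZ subset_refl C satI] by blast
  qed
  show ?thesis using satur fin dims ideal unfolding I_def by blast
qed

end

theorem mainTheorem10:
  fixes p :: int and d :: nat and br :: "zvec \<Rightarrow> zvec \<Rightarrow> zvec" and L :: "zvec set"
  assumes "prime p" and "odd p"
    and "lie_lattice p d br"
    and "saturable p d br (Zpvec p d)"
    and "lie_sublattice p d br L"
  shows "saturable p d br (isolator p (Zpvec p d) L)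
    \<and> finite (cosets p (isolator p (Zpvec p d) L) L)
    \<and> lattice_dim p L = lattice_dim p (isolator p (Zpvec p d) L)
    \<and> (lie_ideal p d br (Zpvec p d) L \<longrightarrow> PF_embedded p d br (Zpvec p d) (isolator p (Zpvec p d) L))"
proof -
  interpret pz p using assms(1) by unfold_locales
  show ?thesis by (rule final[OF assms(3) assms(4) assms(5)])
qed


end
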